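(* Let $A=\Bbbk Q/I$ be a finite-dimensional triangular monomial algebra, let $m,n>0$, and let $x\in\Bbbk(\Gamma_{m-1}\|\mathcal B)$ and $y\in\Bbbk(\Gamma_{n-1}\|\mathcal B)$ be irreducible cocycles. If $x\smile y\ne 0$, then $y\smile x=0$ (at the cochain level).
   Context: Let $\Bbbk$ be a field, $Q=(Q_0,Q_1,s,t)$ a finite quiver, and $A=\Bbbk Q/I$ a finite-dimensional monomial algebra, i.e. $I$ is an ideal generated by paths of length at least $2$. $A$ is triangular if $Q$ has no oriented cycles. Let $E=\Bbbk Q_0$, $A^e=A\otimes_\Bbbk A^{\mathrm{op}}$. Paths are written from right to left ($p=\alpha_n\cdots\alpha_1$, $t(\alpha_i)=s(\alpha_{i+1})$); $qp$ is concatenation. $\mathcal B$ = set of paths not in $I$ (a basis of $A$). If $p=bqa$, $q$ is a divisor; $q\le p$ denotes an occurrence with $\mathrm{pre}_p(q)=a$, $\mathrm{suf}_p(q)=b$; suffix/prefix mean $b$/$a$ trivial; proper means $q\ne p$. For $n\ge -1$, a left $n$-ambiguity is a path $p=u_{-1}u_0\cdots u_n$ with $u_{-1}\in Q_0$, $u_0\in Q_1$, $u_i\in\mathcal B$, and for $0\le i\le n-1$, $u_iu_{i+1}\in I$ while no proper suffix of $u_iu_{i+1}$ lies in $I$; a right $n$-ambiguity is $p=v_n\cdots v_0v_{-1}$ with $v_{-1}\in Q_0$, $v_0\in Q_1$, $v_i\in\mathcal B$, $v_{i+1}v_i\in I$ and no proper prefix of $v_{i+1}v_i$ in $I$. These notions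 coincide; $\Gamma_n$ is the set of $n$-ambiguities; decompositions are unique; $\sigma_m(p):=u_0\cdots u_m$, $\pi_m(p):=v_m\cdots v_0$; $\mathrm{Sub}(p)=\{q\in\Gamma_{n-1}:q\le p\}$. Bardzell's resolution: $\mathbb B(A)_{n+1}=A\otimes_E\Bbbk\Gamma_n\otimes_EA$, with $d(1\otimes p\otimes1)=\sum_{q\in\mathrm{Sub}(p)}\mathrm{suf}_p(q)\otimes q\otimes\mathrm{pre}_p(q)$ for $p\in\Gamma_n$, $n$ odd, and $d(1\otimes p\otimes1)=\mathrm{suf}_p(\pi_{n-1}(p))\otimes\pi_{n-1}(p)\otimes1-1\otimes\sigma_{n-1}(p)\otimes\mathrm{pre}_p(\sigma_{n-1}(p))$ for $n$ even. Let $\Bbbk(\Gamma_n\|\mathcal B):=\mathrm{Hom}_{E^e}(\Bbbk\Gamma_n,A)\cong\mathrm{Hom}_{A^e}(\mathbb B(A)_{n+1},A)$ (cochains of degree $n+1$); it has basis the maps $(p\|b)$ for $p\in\Gamma_n$, $b\in\mathcal B$ parallel to $p$, where $(p\|b)(q)=b$ if $q=p$ and $0$ for other $q\in\Gamma_n$. The differential is $(\partial f)(q)=\hat f(d(1\otimes q\otimes 1))$ with $\hat f(c\otimes p\otimes a)=c\,f(p)\,a$. A cocycle $x=\sum_{i=1}^k\alpha_i(p_i\|b_i)$ with all $\alpha_i\ne0$ and the $(p_i\|b_i)$ pairwise distinct is irreducible if for every proper nonempty subsequence $i_1<\dots<i_\ell$ ($\ell<k$) and all nonzero $\beta_j\in\Bbbk$,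 $\partial(\sum_j\beta_j(p_{i_j}\|b_{i_j}))\ne0$. Cup product of cochains: for $g\in\Bbbk(\Gamma_{j-1}\|\mathcal B)$ and $f\in\Bbbk(\Gamma_{i-1}\|\mathcal B)$, $g\smile f\in\Bbbk(\Gamma_{i+j-1}\|\mathcal B)$ is $(g\smile f)(q)=\sum e\,g(p_2)\,c\,f(p_1)\,a$ for $q\in\Gamma_{i+j-1}$, the sum running over all ways of writing $q=e\,p_2\,c\,p_1\,a$ as a concatenation of paths with $p_1\in\Gamma_{i-1}$, $p_2\in\Gamma_{j-1}$, and products taken in $A$. In particular $((p_2\|b_2)\smile(p_1\|b_1))(q)=\sum_{q=e p_2 c p_1 a}e\,b_2\,c\,b_1\,a$. *)

theory Defs
  imports Main
begin

text \<open>A finite quiver Q = (Q0,Q1,s,t) together with a set of paths (relations,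
 of length at least 2) generating the monomial ideal I.\<close>

record ('v,'a) mquiver =
  verts :: "'v set"
  arrs  :: "'a set"
  src   :: "'a \<Rightarrow> 'v"
  tgt   :: "'a \<Rightarrow> 'v"
  rels  :: "('v \<times> 'a list) set"

text \<open>A path is a pair (start vertex, list of arrows in the order they are traversed).
 The paper's path alpha_n ... alpha_1 (written right to left) is (s(alpha_1), [alpha_1,...,alpha_n]);
 a trivial path (vertex) v is (v, []).\<close>

type_synonym ('v,'a) path = "'v \<times> 'a list"

definition pstart :: "('v,'a) path \<Rightarrow> 'v" where
  "pstart p = fst p"

definition pend :: "('v,'a) mquiver \<Rightarrow> ('v,'a) path \<Rightarrow> 'v" where
  "pend Q p = (if snd p = [] then fst p else tgt Q (last (snd p)))"

definition plen :: "('v,'a) path \<Rightarrow> nat" where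
  "plen p = length (snd p)"

definition valid :: "('v,'a) mquiver \<Rightarrow> ('v,'a) path \<Rightarrow> bool" where
  "valid Q p \<longleftrightarrow> fst p \<in> verts Q \<and> set (snd p) \<subseteq> arrs Q \<and>
     (snd p \<noteq> [] \<longrightarrow> src Q (hd (snd p)) = fst p) \<and>
     (\<forall>i. Suc i < length (snd p) \<longrightarrow> tgt Q (snd p ! i) = src Q (snd p ! Suc i))"

text \<open>cat q p is the concatenation qp of the paper (first p, then q).\<close>
definition cat :: "('v,'a) path \<Rightarrow> ('v,'a) path \<Rightarrow> ('v,'a) path" where
  "cat q p = (fst p, snd p @ snd q)"

definition composable :: "('v,'a) mquiver \<Rightarrow> ('v,'a) path \<Rightarrow> ('v,'a) path \<Rightarrow> bool" where
  "composable Q q p \<longleftrightarrow> pend Q p = pstart q"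

definition parallel :: "('v,'a) mquiver \<Rightarrow> ('v,'a) path \<Rightarrow> ('v,'a) path \<Rightarrow> bool" where
  "parallel Q p b \<longleftrightarrow> pstart p = pstart b \<and> pend Q p = pend Q b"

definition vert_at :: "('v,'a) mquiver \<Rightarrow> ('v,'a) path \<Rightarrow> nat \<Rightarrow> 'v" where
  "vert_at Q p i = (if i = 0 then fst p else tgt Q (snd p ! (i - 1)))"

definition subpath :: "('v,'a) mquiver \<Rightarrow> ('v,'a) path \<Rightarrow> nat \<Rightarrow> nat \<Rightarrow> ('v,'a) path" where
  "subpath Q p i j = (vert_at Q p i, take (j - i) (drop i (snd p)))"

definition inI :: "('v,'a) mquiver \<Rightarrow> ('v,'a) path \<Rightarrow> bool" where
  "inI Q p \<longleftrightarrow> (\<exists>i j. i \<le> j \<and> j \<le> plen p \<and> subpath Q p i j \<in> rels Q)"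

definition basis :: "('v,'a) mquiver \<Rightarrow> ('v,'a) path set" where
  "basis Q = {p. valid Q p \<and> \<not> inI Q p}"

definition monomial_quiver :: "('v,'a) mquiver \<Rightarrow> bool" where
  "monomial_quiver Q \<longleftrightarrow> finite (verts Q) \<and> finite (arrs Q) \<and>
     (\<forall>a\<in>arrs Q. src Q a \<in> verts Q \<and> tgt Q a \<in> verts Q) \<and>
     (\<forall>r\<in>rels Q. valid Q r \<and> plen r \<ge> 2)"

definition triangular :: "('v,'a) mquiver \<Rightarrow> bool" where
  "triangular Q \<longleftrightarrow> (\<forall>p. valid Q p \<and> plen p > 0 \<longrightarrow> pstart p \<noteq> pend Q p)"

definition fin_dim :: "('v,'a) mquiver \<Rightarrow> bool" where
  "fin_dim Q \<longleftrightarrow> finite (basis Q)"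

fun catl :: "('v,'a) path list \<Rightarrow> ('v,'a) path" where
  "catl [] = undefined"
| "catl [u] = u"
| "catl (u # us) = cat u (catl us)"

text \<open>Left n-ambiguity p = u_{-1} u_0 ... u_n, recorded as us = [u_0,...,u_n]
 (u_{-1} is the trivial path at the end of p).\<close>
definition left_dec :: "('v,'a) mquiver \<Rightarrow> nat \<Rightarrow> ('v,'a) path \<Rightarrow> ('v,'a) path list \<Rightarrow> bool" where
  "left_dec Q n p us \<longleftrightarrow> length us = Suc n \<and> plen (us ! 0) = 1 \<and>
     (\<forall>i\<le>n. us ! i \<in> basis Q) \<and>
     (\<forall>i<n. composable Q (us ! i) (us ! Suc i) \<and>
        inI Q (cat (us ! i) (us ! Suc i)) \<and>
        (\<forall>k. 0 < k \<and> k \<le> plen (cat (us ! i) (us ! Suc i)) \<longrightarrow>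
           \<not> inI Q (subpath Q (cat (us ! i) (us ! Suc i)) k (plen (cat (us ! i) (us ! Suc i)))))) \<and>
     p = catl us"

text \<open>Right n-ambiguity p = v_n ... v_0 v_{-1}, recorded as vs = [v_0,...,v_n].\<close>
definition right_dec :: "('v,'a) mquiver \<Rightarrow> nat \<Rightarrow> ('v,'a) path \<Rightarrow> ('v,'a) path list \<Rightarrow> bool" where
  "right_dec Q n p vs \<longleftrightarrow> length vs = Suc n \<and> plen (vs ! 0) = 1 \<and>
     (\<forall>i\<le>n. vs ! i \<in> basis Q) \<and>
     (\<forall>i<n. composable Q (vs ! Suc i) (vs ! i) \<and>
        inI Q (cat (vs ! Suc i) (vs ! i)) \<and>
        (\<forall>k. k < plen (cat (vs ! Suc i) (vs ! i)) \<longrightarrow>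
           \<not> inI Q (subpath Q (cat (vs ! Suc i) (vs ! i)) 0 k))) \<and>
     p = catl (rev vs)"

text \<open>Gamma_n for n >= 0 (the cases needed; Gamma_{-1} = Q_0 is never used).\<close>
definition Gamma :: "('v,'a) mquiver \<Rightarrow> nat \<Rightarrow> ('v,'a) path set" where
  "Gamma Q n = {p. \<exists>us. left_dec Q n p us}"

definition sigma :: "('v,'a) mquiver \<Rightarrow> nat \<Rightarrow> nat \<Rightarrow> ('v,'a) path \<Rightarrow> ('v,'a) path" where
  "sigma Q n m p = catl (take (Suc m) (THE us. left_dec Q n p us))"

definition pi :: "('v,'a) mquiver \<Rightarrow> nat \<Rightarrow> nat \<Rightarrow> ('v,'a) path \<Rightarrow> ('v,'a) path" where
  "pi Q n m p = catl (rev (take (Suc m) (THE vs. right_dec Q n p vs)))"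

text \<open>A cochain in k(Gamma_n || B) is given by its coefficients: f (p,b) is the
 coefficient of the basis map (p||b).\<close>
type_synonym ('v,'a,'k) cochain = "('v,'a) path \<times> ('v,'a) path \<Rightarrow> 'k"

definition is_cochain :: "('v,'a) mquiver \<Rightarrow> nat \<Rightarrow> ('v,'a,'k::zero) cochain \<Rightarrow> bool" where
  "is_cochain Q n f \<longleftrightarrow>
     (\<forall>p b. f (p, b) \<noteq> 0 \<longrightarrow> p \<in> Gamma Q n \<and> b \<in> basis Q \<and> parallel Q p b)"

text \<open>Coefficient of the basis element r in c f(q) a (product in A).\<close>
definition hat :: "('v,'a) mquiver \<Rightarrow> ('v,'a,'k::comm_ring_1) cochain \<Rightarrow>
    ('v,'a) path \<Rightarrow> ('v,'a) path \<Rightarrow> ('v,'a) path \<Rightarrow> ('v,'a) path \<Rightarrow> 'k" where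
  "hat Q f c q a r = (\<Sum>b\<in>basis Q.
      if parallel Q q b \<and> composable Q b a \<and> composable Q c b \<and> cat c (cat b a) = r
      then f (q, b) else 0)"

text \<open>Coboundary of a cochain f on Gamma_{n-1}, giving a cochain on Gamma_n (n >= 1).\<close>
definition cobound :: "('v,'a) mquiver \<Rightarrow> nat \<Rightarrow> ('v,'a,'k::comm_ring_1) cochain \<Rightarrow> ('v,'a,'k) cochain" where
  "cobound Q n f = (\<lambda>(q, r).
     if q \<in> Gamma Q n \<and> r \<in> basis Q \<and> parallel Q q r then
       (if odd n then
          (\<Sum>(i, j)\<in>{(i, j). i \<le> j \<and> j \<le> plen q}.
             if subpath Q q i j \<in> Gamma Q (n - 1)
             then hat Q f (subpath Q q j (plen q)) (subpath Q q i j) (subpath Q q 0 i) r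
             else 0)
        else
          (let P = pi Q n (n - 1) q; S = sigma Q n (n - 1) q in
             hat Q f (subpath Q q (plen P) (plen q)) P (subpath Q q 0 0) r
           - hat Q f (subpath Q q (plen q) (plen q)) S (subpath Q q 0 (plen q - plen S)) r))
     else 0)"

text \<open>Cup product g \<smile> f for g on Gamma_a (i.e. j = a+1) and f on Gamma_b (i = b+1),
 giving a cochain on Gamma_{a+b+1}: sum over q = e p2 c p1 a0.\<close>
definition cup :: "('v,'a) mquiver \<Rightarrow> nat \<Rightarrow> nat \<Rightarrow> ('v,'a,'k::comm_ring_1) cochain \<Rightarrow>
    ('v,'a,'k) cochain \<Rightarrow> ('v,'a,'k) cochain" where
  "cup Q a b g f = (\<lambda>(q, r).
     if q \<in> Gamma Q (a + b + 1) \<and> r \<in> basis Q \<and> parallel Q q r then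
       (\<Sum>(i1, i2, i3, i4)\<in>{(i1, i2, i3, i4). i1 \<le> i2 \<and> i2 \<le> i3 \<and> i3 \<le> i4 \<and> i4 \<le> plen q}.
          (\<Sum>b2\<in>basis Q. \<Sum>b1\<in>basis Q.
             (let a0 = subpath Q q 0 i1; p1 = subpath Q q i1 i2; c = subpath Q q i2 i3;
                  p2 = subpath Q q i3 i4; e = subpath Q q i4 (plen q) in
              if p1 \<in> Gamma Q b \<and> p2 \<in> Gamma Q a \<and> parallel Q p1 b1 \<and> parallel Q p2 b2 \<and>
                 cat e (cat b2 (cat c (cat b1 a0))) = r
              then g (p2, b2) * f (p1, b1) else 0)))
     else 0)"

definition irreducible_cocycle :: "('v,'a) mquiver \<Rightarrow> nat \<Rightarrow> ('v,'a,'k::comm_ring_1) cochain \<Rightarrow> bool" where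
  "irreducible_cocycle Q n x \<longleftrightarrow> is_cochain Q n x \<and> cobound Q (Suc n) x = (\<lambda>_. 0) \<and>
     (\<forall>S. S \<subset> {s. x s \<noteq> 0} \<and> S \<noteq> {} \<longrightarrow>
        (\<forall>\<beta> :: (('v,'a) path \<times> ('v,'a) path \<Rightarrow> 'k). (\<forall>s\<in>S. \<beta> s \<noteq> 0) \<longrightarrow>
           cobound Q (Suc n) (\<lambda>s. if s \<in> S then \<beta> s else 0) \<noteq> (\<lambda>_. 0)))"

end

theory Submission
  imports Defs
begin

lemma plen_subpath: "j \<le> plen p \<Longrightarrow> plen (subpath Q p i j) = j - i"
  by (simp add: plen_def subpath_def)

lemma pend_subpath: "i \<le> j \<Longrightarrow> j \<le> plen p \<Longrightarrow> pend Q (subpath Q p i j) = vert_at Q p j"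
proof (cases "i = j")
  case True assume "i \<le> j" "j \<le> plen p" then show ?thesis using True by (simp add: pend_def subpath_def)
next
  case False assume a: "i \<le> j" "j \<le> plen p"
  then have ne: "take (j - i) (drop i (snd p)) \<noteq> []" using False by (simp add: plen_def)
  have "last (take (j - i) (drop i (snd p))) = take (j - i) (drop i (snd p)) ! (j - i - 1)"
    using ne a by (simp add: last_conv_nth plen_def)
  also have "\<dots> = snd p ! (j - 1)" using a False by (simp add: plen_def)
  finally have "last (take (j - i) (drop i (snd p))) = snd p ! (j - 1)" .
  then show ?thesis using ne False a by (simp add: pend_def subpath_def vert_at_def)
qed

lemma pstart_subpath: "pstart (subpath Q p i j) = vert_at Q p i"
  by (simp add: pstart_def subpath_def)

lemma subpath_subpath:
  assumes "i \<le> j" "j \<le> plen p" "i0 \<le> j0" "j0 \<le> j - i"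
  shows "subpath Q (subpath Q p i j) i0 j0 = subpath Q p (i+i0) (i+j0)"
proof -
  have "drop i0 (take (j - i) (drop i (snd p))) = take (j - i - i0) (drop (i + i0) (snd p))"
    by (simp add: drop_take add.commute)
  then have 1: "snd (subpath Q (subpath Q p i j) i0 j0) = snd (subpath Q p (i+i0) (i+j0))"
    using assms by (simp add: subpath_def min_def)
  have 2: "fst (subpath Q (subpath Q p i j) i0 j0) = fst (subpath Q p (i+i0) (i+j0))"
  proof (cases "i0 = 0")
    case True then show ?thesis by (simp add: subpath_def vert_at_def)
  next
    case False
    then have "take (j - i) (drop i (snd p)) ! (i0 - 1) = snd p ! (i + i0 - 1)"
      using assms by (simp add: plen_def)
    then show ?thesis using False by (simp add: subpath_def vert_at_def)
  qed
  show ?thesis using 1 2 by (simp add: prod_eq_iff)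
qed

lemma cat_subpath:
  assumes "i \<le> j" "j \<le> k" "k \<le> plen p"
  shows "cat (subpath Q p j k) (subpath Q p i j) = subpath Q p i k"
proof -
  have "take (j - i) (drop i (snd p)) @ take (k - j) (drop j (snd p)) = take (k - i) (drop i (snd p))"
  proof -
    have "k - i = (j - i) + (k - j)" using assms by simp
    then have "take (k - i) (drop i (snd p)) = take (j - i) (drop i (snd p)) @ take (k - j) (drop (j - i) (drop i (snd p)))"
      by (simp add: take_add)
    also have "drop (j - i) (drop i (snd p)) = drop j (snd p)" using assms by simp
    finally show ?thesis by simp
  qed
  then show ?thesis by (simp add: cat_def subpath_def)
qed

lemma subpath_full: "subpath Q p 0 (plen p) = p"
  by (simp add: subpath_def vert_at_def plen_def)

lemma cat_assoc: "cat a (cat b c) = cat (cat a b) c"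
  by (simp add: cat_def)

lemma subpath_cat_left:
  assumes "j \<le> plen P" "i \<le> j"
  shows "subpath Q (cat w P) i j = subpath Q P i j"
proof -
  have "fst (subpath Q (cat w P) i j) = fst (subpath Q P i j)"
  proof (cases "i = 0")
    case True then show ?thesis by (simp add: subpath_def vert_at_def cat_def)
  next
    case False
    then have "i - 1 < plen P" using assms by simp
    then show ?thesis using False
      by (simp add: subpath_def vert_at_def cat_def plen_def nth_append)
  qed
  moreover have "snd (subpath Q (cat w P) i j) = snd (subpath Q P i j)"
    using assms by (simp add: subpath_def cat_def plen_def)
  ultimately show ?thesis by (simp add: prod_eq_iff)
qed

lemma vert_at_cat_plen:
  "vert_at Q (cat w P) (plen P) = pend Q P"
  by (simp add: vert_at_def cat_def plen_def pend_def last_conv_nth nth_append)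

lemma subpath_cat_right:
  assumes "fst w = pend Q P"
  shows "subpath Q (cat w P) (plen P) (plen P + plen w) = w"
  using assms vert_at_cat_plen[of Q w P]
  by (simp add: subpath_def cat_def plen_def prod_eq_iff)

lemma plen_cat: "plen (cat q p) = plen p + plen q"
  by (simp add: plen_def cat_def)

lemma pend_cat: "composable Q q p \<Longrightarrow> pend Q (cat q p) = pend Q q"
  by (auto simp add: composable_def pend_def cat_def pstart_def)

lemma pstart_cat: "pstart (cat q p) = pstart p"
  by (simp add: pstart_def cat_def)


lemma vert_at_in:
  assumes "monomial_quiver Q" "valid Q p" "i \<le> plen p"
  shows "vert_at Q p i \<in> verts Q"
proof (cases "i = 0")
  case True then show ?thesis using assms by (simp add: vert_at_def valid_def)
next
  case False
  then have "snd p ! (i - 1) \<in> arrs Q" using assms by (auto simp: valid_def plen_def)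
  then show ?thesis using False assms by (simp add: vert_at_def monomial_quiver_def)
qed

lemma valid_src:
  assumes "valid Q p" "i < plen p"
  shows "src Q (snd p ! i) = vert_at Q p i"
proof (cases "i = 0")
  case True then show ?thesis using assms by (simp add: vert_at_def valid_def plen_def hd_conv_nth)
next
  case False
  then have "tgt Q (snd p ! (i - 1)) = src Q (snd p ! Suc (i - 1))" using assms
    unfolding valid_def plen_def by (metis Suc_pred' not_gr_zero)
  then show ?thesis using False by (simp add: vert_at_def)
qed

lemma valid_subpath:
  assumes mq: "monomial_quiver Q" and v: "valid Q p" and ij: "i \<le> j" "j \<le> plen p"
  shows "valid Q (subpath Q p i j)"
proof -
  let ?s = "take (j - i) (drop i (snd p))"
  have a: "fst (subpath Q p i j) \<in> verts Q" using vert_at_in[OF mq v] ij by (simp add: subpath_def)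
  have b: "set ?s \<subseteq> arrs Q" using v unfolding valid_def
    by (meson order_trans set_drop_subset set_take_subset)
  have c: "?s \<noteq> [] \<longrightarrow> src Q (hd ?s) = fst (subpath Q p i j)"
  proof
    assume ne: "?s \<noteq> []"
    then have "i < plen p" by (simp add: plen_def)
    moreover have "hd ?s = snd p ! i" using ne by (simp add: hd_conv_nth)
    ultimately show "src Q (hd ?s) = fst (subpath Q p i j)"
      using valid_src[OF v] by (simp add: subpath_def)
  qed
  have d: "\<forall>k. Suc k < length ?s \<longrightarrow> tgt Q (?s ! k) = src Q (?s ! Suc k)"
  proof (intro allI impI)
    fix k assume "Suc k < length ?s"
    then have "Suc (i + k) < length (snd p)" by auto
    then have "tgt Q (snd p ! (i+k)) = src Q (snd p ! Suc (i+k))" using v unfolding valid_def by blast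
    moreover have "drop i (snd p) ! k = snd p ! (i+k)" "drop i (snd p) ! Suc k = snd p ! Suc (i+k)"
      using \<open>Suc (i + k) < length (snd p)\<close> by simp_all
    ultimately show "tgt Q (?s ! k) = src Q (?s ! Suc k)" using \<open>Suc k < length ?s\<close>
      by simp
  qed
  show ?thesis using a b c d unfolding valid_def by (simp add: subpath_def)
qed

lemma valid_cat:
  assumes vq: "valid Q q" and vp: "valid Q p" and c: "composable Q q p"
  shows "valid Q (cat q p)"
proof -
  have e: "pend Q p = fst q" using c by (simp add: composable_def pstart_def)
  have a: "fst (cat q p) \<in> verts Q" using vp by (simp add: cat_def valid_def)
  have b: "set (snd (cat q p)) \<subseteq> arrs Q" using vp vq by (simp add: cat_def valid_def)
  have h: "snd (cat q p) \<noteq> [] \<longrightarrow> src Q (hd (snd (cat q p))) = fst (cat q p)"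
  proof (cases "snd p = []")
    case True then show ?thesis using vq e by (simp add: cat_def valid_def pend_def)
  next
    case False then show ?thesis using vp by (simp add: cat_def valid_def)
  qed
  have d: "\<forall>k. Suc k < length (snd (cat q p)) \<longrightarrow>
      tgt Q (snd (cat q p) ! k) = src Q (snd (cat q p) ! Suc k)"
  proof (intro allI impI)
    fix k assume k: "Suc k < length (snd (cat q p))"
    show "tgt Q (snd (cat q p) ! k) = src Q (snd (cat q p) ! Suc k)"
    proof (cases "Suc k < length (snd p)")
      case True then show ?thesis using vp by (simp add: cat_def valid_def nth_append)
    next
      case F1: False
      show ?thesis
      proof (cases "Suc k = length (snd p)")
        case True
        then have "snd p \<noteq> []" and kk: "k = length (snd p) - 1" by auto
        then have "tgt Q (snd p ! k) = fst q" using e kk by (simp add: pend_def last_conv_nth)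
        moreover have "snd q \<noteq> []" using k True by (simp add: cat_def)
        ultimately show ?thesis using True vq by (simp add: cat_def nth_append valid_def hd_conv_nth)
      next
        case False
        then have "length (snd p) \<le> k" using F1 by simp
        moreover have "Suc (k - length (snd p)) < length (snd q)" using k calculation by (simp add: cat_def)
        ultimately show ?thesis using vq unfolding valid_def
          by (simp add: cat_def nth_append Suc_diff_le)
      qed
    qed
  qed
  show ?thesis using a b h d unfolding valid_def by blast
qed

lemma vert_inj:
  assumes tr: "triangular Q" and mq: "monomial_quiver Q" and v: "valid Q p" and ij: "i < j" "j \<le> plen p"
  shows "vert_at Q p i \<noteq> vert_at Q p j"
proof -
  have "valid Q (subpath Q p i j)" using valid_subpath[OF mq v] ij by simp
  moreover have "plen (subpath Q p i j) > 0" using ij by (simp add: plen_subpath)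
  ultimately have "pstart (subpath Q p i j) \<noteq> pend Q (subpath Q p i j)" using tr
    unfolding triangular_def by blast
  then show ?thesis using ij by (simp add: pstart_subpath pend_subpath)
qed

lemma distinct_valid:
  assumes tr: "triangular Q" and mq: "monomial_quiver Q" and v: "valid Q p"
  shows "distinct (snd p)"
proof -
  have "snd p ! i \<noteq> snd p ! j" if "i < j" "j < length (snd p)" for i j
  proof
    assume eq: "snd p ! i = snd p ! j"
    have "vert_at Q p (Suc i) = vert_at Q p (Suc j)" using eq by (simp add: vert_at_def)
    moreover have "vert_at Q p (Suc i) \<noteq> vert_at Q p (Suc j)"
      using vert_inj[OF tr mq v, of "Suc i" "Suc j"] that by (simp add: plen_def)
    ultimately show False by simp
  qed
  then show ?thesis unfolding distinct_conv_nth by (metis linorder_neqE_nat)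
qed

definition reach :: "('v,'a) mquiver \<Rightarrow> 'v \<Rightarrow> 'v \<Rightarrow> bool" where
  "reach Q u v \<longleftrightarrow> (\<exists>w. valid Q w \<and> pstart w = u \<and> pend Q w = v)"
definition reachp :: "('v,'a) mquiver \<Rightarrow> 'v \<Rightarrow> 'v \<Rightarrow> bool" where
  "reachp Q u v \<longleftrightarrow> (\<exists>w. valid Q w \<and> plen w > 0 \<and> pstart w = u \<and> pend Q w = v)"

lemma reach_trans: "reach Q u v \<Longrightarrow> reach Q v w \<Longrightarrow> reach Q u w"
  unfolding reach_def
  by (metis composable_def pend_cat pstart_cat valid_cat)

lemma reachp_reach: "reachp Q u v \<Longrightarrow> reach Q v w \<Longrightarrow> reachp Q u w"
  unfolding reach_def reachp_def
  by (metis add_gr_0 composable_def pend_cat plen_cat pstart_cat valid_cat)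

lemma reach_reachp: "reach Q u v \<Longrightarrow> reachp Q v w \<Longrightarrow> reachp Q u w"
  unfolding reach_def reachp_def
  by (metis add_gr_0 composable_def pend_cat plen_cat pstart_cat valid_cat)

lemma reachp_irrefl: "triangular Q \<Longrightarrow> \<not> reachp Q u u"
  unfolding reachp_def triangular_def by (metis pstart_def)

lemma reach_subpath:
  assumes "monomial_quiver Q" "valid Q p" "i \<le> j" "j \<le> plen p"
  shows "reach Q (vert_at Q p i) (vert_at Q p j)"
  unfolding reach_def using assms valid_subpath pstart_subpath pend_subpath by metis

lemma arrow_reach:
  assumes mq: "monomial_quiver Q" and v: "valid Q p" and a: "\<alpha> \<in> set (snd p)"
  shows "reachp Q (pstart p) (tgt Q \<alpha>) \<and> reach Q (tgt Q \<alpha>) (pend Q p)"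
proof -
  obtain k where k: "k < plen p" "snd p ! k = \<alpha>" using a by (auto simp: in_set_conv_nth plen_def)
  have t: "vert_at Q p (Suc k) = tgt Q \<alpha>" using k by (simp add: vert_at_def)
  have 1: "reachp Q (pstart p) (tgt Q \<alpha>)"
    unfolding reachp_def
    apply (rule exI[of _ "subpath Q p 0 (Suc k)"])
    using valid_subpath[OF mq v, of 0 "Suc k"] k t
    by (simp add: plen_subpath pstart_subpath pend_subpath, simp add: vert_at_def pstart_def)
  have "pend Q p = vert_at Q p (plen p)"
    by (metis pend_subpath subpath_full order_refl zero_le)
  then have 2: "reach Q (tgt Q \<alpha>) (pend Q p)"
    using reach_subpath[OF mq v, of "Suc k" "plen p"] k t by simp
  show ?thesis using 1 2 by simp
qed


lemma catl_Cons: "us \<noteq> [] \<Longrightarrow> catl (u # us) = cat u (catl us)"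
  by (cases us) auto

lemma catl_append: "us1 \<noteq> [] \<Longrightarrow> us2 \<noteq> [] \<Longrightarrow> catl (us1 @ us2) = cat (catl us1) (catl us2)"
proof (induction us1)
  case Nil then show ?case by simp
next
  case (Cons u us1)
  show ?case
  proof (cases "us1 = []")
    case True then show ?thesis using Cons by (simp add: catl_Cons)
  next
    case False then show ?thesis using Cons by (simp add: catl_Cons cat_assoc)
  qed
qed

definition chainL :: "('v,'a) mquiver \<Rightarrow> ('v,'a) path list \<Rightarrow> bool" where
  "chainL Q us \<longleftrightarrow> (\<forall>i. Suc i < length us \<longrightarrow> composable Q (us ! i) (us ! Suc i))"

lemma chainL_tl: "chainL Q (u # us) \<Longrightarrow> chainL Q us"
  unfolding chainL_def by (metis Suc_less_eq length_Cons nth_Cons_Suc)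

lemma chainL_hd: "chainL Q (u # us) \<Longrightarrow> us \<noteq> [] \<Longrightarrow> composable Q u (hd us)"
proof -
  assume a: "chainL Q (u # us)" "us \<noteq> []"
  have "Suc 0 < length (u#us)" using a(2) by (cases us) auto
  then have "composable Q ((u#us) ! 0) ((u#us) ! Suc 0)" using a(1) unfolding chainL_def by blast
  then show ?thesis using a(2) by (simp add: hd_conv_nth)
qed

lemma pend_catl: "chainL Q us \<Longrightarrow> us \<noteq> [] \<Longrightarrow> pend Q (catl us) = pend Q (hd us)"
proof (induction us)
  case Nil then show ?case by simp
next
  case (Cons u us)
  show ?case
  proof (cases "us = []")
    case True then show ?thesis by simp
  next
    case False
    have c: "composable Q u (catl us)"
      using Cons.IH[OF chainL_tl[OF Cons.prems(1)] False] Cons.prems(1) False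
      using chainL_hd[OF Cons.prems(1) False] by (simp add: composable_def)
    show ?thesis using False pend_cat[OF c] by (simp add: catl_Cons)
  qed
qed

lemma valid_catl: "chainL Q us \<Longrightarrow> us \<noteq> [] \<Longrightarrow> (\<forall>u\<in>set us. valid Q u) \<Longrightarrow> valid Q (catl us)"
proof (induction us)
  case Nil then show ?case by simp
next
  case (Cons u us)
  show ?case
  proof (cases "us = []")
    case True then show ?thesis using Cons by simp
  next
    case False
    have c: "composable Q u (catl us)"
      using pend_catl[OF chainL_tl[OF Cons.prems(1)] False] Cons.prems(1) False
      using chainL_hd[OF Cons.prems(1) False] by (simp add: composable_def)
    have "valid Q (catl us)" using Cons.IH[OF chainL_tl[OF Cons.prems(1)] False] Cons.prems(3) by simp
    then show ?thesis using False valid_cat[OF _ _ c] Cons.prems by (simp add: catl_Cons)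
  qed
qed

lemma plen_catl: "us \<noteq> [] \<Longrightarrow> plen (catl us) = sum_list (map plen us)"
proof (induction us)
  case Nil then show ?case by simp
next
  case (Cons u us) then show ?case by (cases "us = []") (auto simp: catl_Cons plen_cat)
qed

definition Epos :: "('v,'a) path list \<Rightarrow> nat \<Rightarrow> nat" where
  "Epos us i = sum_list (map plen (drop i us))"

lemma Epos_Suc: "i < length us \<Longrightarrow> Epos us i = plen (us ! i) + Epos us (Suc i)"
  unfolding Epos_def by (simp add: Cons_nth_drop_Suc[symmetric])

lemma Epos_mono: "i \<le> j \<Longrightarrow> Epos us j \<le> Epos us i"
  unfolding Epos_def
proof -
  assume "i \<le> j"
  then have "drop i us = take (j - i) (drop i us) @ drop j us"
    by (metis append_take_drop_id drop_drop le_add_diff_inverse2)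
  then show "sum_list (map plen (drop j us)) \<le> sum_list (map plen (drop i us))"
    by (metis le_add2 map_append sum_list_append)
qed

lemma Epos_0: "us \<noteq> [] \<Longrightarrow> Epos us 0 = plen (catl us)"
  by (simp add: Epos_def plen_catl)

lemma Epos_len: "Epos us (length us) = 0"
  by (simp add: Epos_def)

lemma decomp:
  assumes "chainL Q us" "us \<noteq> []"
  shows "\<forall>i<length us. us ! i = subpath Q (catl us) (Epos us (Suc i)) (Epos us i)"
  using assms
proof (induction us)
  case Nil then show ?case by simp
next
  case (Cons u us)
  show ?case
  proof (cases "us = []")
    case True then show ?thesis by (simp add: Epos_def subpath_full)
  next
    case False
    have c: "composable Q u (catl us)"
      using pend_catl[OF chainL_tl[OF Cons.prems(1)] False] Cons.prems(1) False
      using chainL_hd[OF Cons.prems(1) False] by (simp add: composable_def)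
    have IH: "\<forall>i<length us. us ! i = subpath Q (catl us) (Epos us (Suc i)) (Epos us i)"
      using Cons.IH chainL_tl[OF Cons.prems(1)] False by blast
    have E1: "Epos (u # us) 1 = plen (catl us)" using False by (simp add: Epos_def plen_catl)
    have E0: "Epos (u # us) 0 = plen (catl us) + plen u" using False by (simp add: Epos_def plen_catl)
    show ?thesis
    proof (intro allI impI)
      fix i assume i: "i < length (u # us)"
      show "(u # us) ! i = subpath Q (catl (u # us)) (Epos (u # us) (Suc i)) (Epos (u # us) i)"
      proof (cases i)
        case 0
        have "fst u = pend Q (catl us)" using c by (simp add: composable_def pstart_def)
        then show ?thesis using 0 E1 E0 subpath_cat_right[of u Q "catl us"] False
          by (simp add: catl_Cons)
      next
        case (Suc k)
        then have k: "k < length us" using i by simp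
        have le1: "Epos us k \<le> plen (catl us)" using Epos_mono[of 0 k us] Epos_0[OF False] by simp
        have le2: "Epos us (Suc k) \<le> Epos us k" using Epos_mono[of k "Suc k" us] by simp
        have "(u # us) ! i = subpath Q (catl us) (Epos us (Suc k)) (Epos us k)" using IH k Suc by simp
        also have "\<dots> = subpath Q (cat u (catl us)) (Epos us (Suc k)) (Epos us k)"
          using subpath_cat_left[OF le1 le2] by simp
        finally show ?thesis using Suc False by (simp add: catl_Cons Epos_def)
      qed
    qed
  qed
qed

lemma inI_mono:
  assumes "inI Q (subpath Q q a b)" "c \<le> a" "a \<le> b" "b \<le> d" "d \<le> plen q"
  shows "inI Q (subpath Q q c d)"
proof -
  obtain i j where ij: "i \<le> j" "j \<le> plen (subpath Q q a b)" "subpath Q (subpath Q q a b) i j \<in> rels Q"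
    using assms(1) unfolding inI_def by blast
  have jb: "j \<le> b - a" using ij(2) assms by (simp add: plen_subpath)
  have "subpath Q (subpath Q q a b) i j = subpath Q q (a + i) (a + j)"
    using subpath_subpath[of a b q i j Q] assms ij jb by simp
  also have "\<dots> = subpath Q (subpath Q q c d) (a - c + i) (a - c + j)"
    using subpath_subpath[of c d q "a - c + i" "a - c + j" Q] assms ij jb by simp
  finally have "subpath Q (subpath Q q c d) (a - c + i) (a - c + j) \<in> rels Q" using ij by simp
  moreover have "a - c + j \<le> plen (subpath Q q c d)" using assms jb by (simp add: plen_subpath)
  moreover have "a - c + i \<le> a - c + j" using ij(1) by simp
  ultimately show ?thesis unfolding inI_def by blast
qed


fun rseq :: "(nat \<Rightarrow> nat \<Rightarrow> bool) \<Rightarrow> nat \<Rightarrow> nat" where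
  "rseq R 0 = 0"
| "rseq R (Suc 0) = 1"
| "rseq R (Suc (Suc k)) = (LEAST e. R (rseq R k) e)"

lemma right_from_left:
  fixes R :: "nat \<Rightarrow> nat \<Rightarrow> bool" and T :: "nat \<Rightarrow> nat"
  assumes mono: "\<And>a b c d. c \<le> a \<Longrightarrow> b \<le> d \<Longrightarrow> d \<le> L \<Longrightarrow> R a b \<Longrightarrow> R c d"
    and n: "n \<ge> 1" and T0: "T 0 = 0" and Tn: "Suc (T n) = L" and TL: "T (Suc n) = L"
    and Tm: "\<And>i. i \<le> n \<Longrightarrow> T i \<le> T (Suc i)"
    and lR: "\<And>i. i < n \<Longrightarrow> R (T i) (T (Suc (Suc i)))"
    and lmin: "\<And>i s. i < n \<Longrightarrow> T i < s \<Longrightarrow> s \<le> T (Suc (Suc i)) \<Longrightarrow> \<not> R s (T (Suc (Suc i)))"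
    and lB: "\<And>i. i \<le> n \<Longrightarrow> \<not> R (T i) (T (Suc i))"
  defines "S \<equiv> rseq R"
  shows "S 0 = 0 \<and> S 1 = 1 \<and> S (Suc n) = L \<and> (\<forall>k\<le>n. S k < S (Suc k))
     \<and> (\<forall>k<n. R (S k) (S (Suc (Suc k))) \<and> (\<forall>e. e < S (Suc (Suc k)) \<longrightarrow> \<not> R (S k) e))
     \<and> (\<forall>k\<le>n. \<not> R (S k) (S (Suc k)))"
proof -
  have TmonoG: "T i \<le> T j" if "i \<le> j" "j \<le> Suc n" for i j
    using that
  proof (induction j)
    case 0 then show ?case by simp
  next
    case (Suc j)
    then show ?case using Tm[of j] by (cases "i = Suc j") auto
  qed
  have TleL: "T i \<le> L" if "i \<le> Suc n" for i using TmonoG[OF that] TL by simp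
  have T1: "1 \<le> T 1"
  proof (rule ccontr)
    assume "\<not> 1 \<le> T 1"
    then have "T 1 = 0" by simp
    have "R (T 0) (T 2)" using lR[of 0] n by (simp add: numeral_2_eq_2)
    moreover have "\<not> R (T 1) (T 2)" using lB[of 1] n by (simp add: numeral_2_eq_2)
    ultimately show False using \<open>T 1 = 0\<close> T0 by simp
  qed
  have claim: "\<forall>k. k \<le> Suc n \<longrightarrow> 0 < k \<longrightarrow> T (k - 1) < S k \<and> S k \<le> T k"
  proof (intro allI)
    fix k show "k \<le> Suc n \<longrightarrow> 0 < k \<longrightarrow> T (k - 1) < S k \<and> S k \<le> T k"
    proof (induction k rule: less_induct)
      case (less k)
      show ?case
      proof (intro impI)
        assume k: "k \<le> Suc n" "0 < k"
        show "T (k - 1) < S k \<and> S k \<le> T k"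
        proof (cases k)
          case 0 then show ?thesis using k by simp
        next
          case (Suc k1)
          show ?thesis
          proof (cases k1)
            case 0 then show ?thesis using Suc T0 T1 by (simp add: S_def)
          next
            case (Suc j)
            have kk: "k = Suc (Suc j)" using \<open>k = Suc k1\<close> Suc by simp
            have jn: "j < n" using k kk by simp
            have Sj: "S j \<le> T j"
            proof (cases j)
              case 0 then show ?thesis by (simp add: S_def T0)
            next
              case (Suc j') then show ?thesis using less.IH[of j] kk jn by simp
            qed
            have ex: "R (S j) (T (Suc (Suc j)))"
              using mono[OF Sj _ _ lR[OF jn]] TleL[of "Suc (Suc j)"] jn by simp
            have Sk: "S k = (LEAST e. R (S j) e)" using kk by (simp add: S_def)
            have up: "S k \<le> T k" using Sk kk ex by (simp add: Least_le)
            have lo: "T (Suc j) < S k"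
            proof (rule ccontr)
              assume "\<not> T (Suc j) < S k"
              then have le: "S k \<le> T (Suc j)" by simp
              have "R (S j) (S k)" using Sk ex by (simp add: LeastI)
              then have r: "R (S j) (T (Suc j))" using mono[OF le_refl le] TleL[of "Suc j"] jn by simp
              show False
              proof (cases j)
                case 0 then show False using r lB[of 0] by (simp add: S_def T0)
              next
                case (Suc j')
                have "T (j - 1) < S j" using less.IH[of j] kk jn Suc by simp
                moreover have "S j \<le> T (Suc j)" using Sj Tm[of j] jn by simp
                ultimately show False using lmin[of j' "S j"] r Suc jn by simp
              qed
            qed
            show ?thesis using up lo kk by simp
          qed
        qed
      qed
    qed
  qed
  have S0: "S 0 = 0" by (simp add: S_def)
  have S1: "S 1 = 1" by (simp add: S_def)
  have SL: "S (Suc n) = L" using claim[rule_format, of "Suc n"] Tn TL by simp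
  have Sinc: "\<forall>k\<le>n. S k < S (Suc k)"
  proof (intro allI impI)
    fix k assume k: "k \<le> n"
    show "S k < S (Suc k)"
    proof (cases k)
      case 0 then show ?thesis using S0 S1 by simp
    next
      case (Suc k')
      then show ?thesis using claim[rule_format, of k] claim[rule_format, of "Suc k"] k by simp
    qed
  qed
  have Sex: "R (S k) (T (Suc (Suc k)))" if "k < n" for k
  proof -
    have "S k \<le> T k"
    proof (cases k)
      case 0 then show ?thesis by (simp add: S_def T0)
    next
      case (Suc k') then show ?thesis using claim[rule_format, of k] that by simp
    qed
    then show ?thesis using mono[OF _ _ _ lR[OF that]] TleL[of "Suc (Suc k)"] that by simp
  qed
  have Sleast: "S (Suc (Suc k)) = (LEAST e. R (S k) e)" for k by (simp add: S_def)
  have SR: "\<forall>k<n. R (S k) (S (Suc (Suc k))) \<and> (\<forall>e. e < S (Suc (Suc k)) \<longrightarrow> \<not> R (S k) e)"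
  proof (intro allI impI)
    fix k assume k: "k < n"
    have a: "R (S k) (S (Suc (Suc k)))" unfolding Sleast by (rule LeastI[of "\<lambda>e. R (S k) e", OF Sex[OF k]])
    have b: "\<forall>e. e < S (Suc (Suc k)) \<longrightarrow> \<not> R (S k) e" unfolding Sleast using not_less_Least by blast
    show "R (S k) (S (Suc (Suc k))) \<and> (\<forall>e. e < S (Suc (Suc k)) \<longrightarrow> \<not> R (S k) e)" using a b by blast
  qed
  have SB: "\<forall>k\<le>n. \<not> R (S k) (S (Suc k))"
  proof (intro allI impI)
    fix k assume k: "k \<le> n"
    show "\<not> R (S k) (S (Suc k))"
    proof (cases "k < n")
      case True
      have "S (Suc k) < S (Suc (Suc k))" using Sinc True by simp
      then show ?thesis unfolding Sleast[of k] by (rule not_less_Least)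
    next
      case False
      then have kn: "k = n" using k by simp
      obtain n' where n': "n = Suc n'" using n by (cases n) auto
      have "T n' < S n \<and> S n \<le> T n" using claim[rule_format, of n] n n' by simp
      moreover have "T n \<le> T (Suc (Suc n'))" using Tm[of n] n' by simp
      ultimately show ?thesis using lmin[of n' "S n"] n' kn SL TL by simp
    qed
  qed
  show ?thesis using S0 S1 SL Sinc SR SB by simp
qed

lemma left_pos_unique:
  fixes R :: "nat \<Rightarrow> nat \<Rightarrow> bool" and T T' :: "nat \<Rightarrow> nat"
  assumes Tn: "T n = T' n" and TL: "T (Suc n) = T' (Suc n)"
    and Tm: "\<And>i. i \<le> n \<Longrightarrow> T i \<le> T (Suc i)"
    and Tm': "\<And>i. i \<le> n \<Longrightarrow> T' i \<le> T' (Suc i)"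
    and lR: "\<And>i. i < n \<Longrightarrow> R (T i) (T (Suc (Suc i)))"
    and lR': "\<And>i. i < n \<Longrightarrow> R (T' i) (T' (Suc (Suc i)))"
    and lmin: "\<And>i s. i < n \<Longrightarrow> T i < s \<Longrightarrow> s \<le> T (Suc (Suc i)) \<Longrightarrow> \<not> R s (T (Suc (Suc i)))"
    and lmin': "\<And>i s. i < n \<Longrightarrow> T' i < s \<Longrightarrow> s \<le> T' (Suc (Suc i)) \<Longrightarrow> \<not> R s (T' (Suc (Suc i)))"
  shows "\<forall>j\<le>Suc n. T j = T' j"
proof -
  have "\<forall>d. d \<le> Suc n \<longrightarrow> T (Suc n - d) = T' (Suc n - d)"
  proof (intro allI)
    fix d show "d \<le> Suc n \<longrightarrow> T (Suc n - d) = T' (Suc n - d)"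
    proof (induction d rule: less_induct)
      case (less d)
      show ?case
      proof (intro impI)
        assume d: "d \<le> Suc n"
        show "T (Suc n - d) = T' (Suc n - d)"
        proof (cases "d \<le> 1")
          case True then show ?thesis using Tn TL by (cases d) auto
        next
          case False
          define j where "j = Suc n - d"
          have jn: "j < n" using False d j_def by simp
          have j2: "Suc (Suc j) = Suc n - (d - 2)" using False d j_def by simp
          have eq2: "T (Suc (Suc j)) = T' (Suc (Suc j))" using less.IH[of "d - 2"] j2 False d by simp
          have m1: "T j \<le> T (Suc (Suc j))" using Tm[of j] Tm[of "Suc j"] jn by simp
          have m2: "T' j \<le> T' (Suc (Suc j))" using Tm'[of j] Tm'[of "Suc j"] jn by simp
          have "\<not> T j < T' j"
          proof
            assume "T j < T' j"
            then show False using lmin[OF jn, of "T' j"] lR'[OF jn] eq2 m2 by simp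
          qed
          moreover have "\<not> T' j < T j"
          proof
            assume "T' j < T j"
            then show False using lmin'[OF jn, of "T j"] lR[OF jn] eq2 m1 by simp
          qed
          ultimately show ?thesis unfolding j_def[symmetric] by simp
        qed
      qed
    qed
  qed
  then show ?thesis
  proof (intro allI impI)
    fix j assume j: "j \<le> Suc n" and h: "\<forall>d. d \<le> Suc n \<longrightarrow> T (Suc n - d) = T' (Suc n - d)"
    have "Suc n - (Suc n - j) = j" using j by simp
    then show "T j = T' j" using h[rule_format, of "Suc n - j"] by simp
  qed
qed

lemma right_pos_unique:
  fixes R :: "nat \<Rightarrow> nat \<Rightarrow> bool" and S S' :: "nat \<Rightarrow> nat"
  assumes S0: "S 0 = S' 0" and S1: "S 1 = S' 1"
    and rR: "\<And>k. k < n \<Longrightarrow> R (S k) (S (Suc (Suc k)))"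
    and rR': "\<And>k. k < n \<Longrightarrow> R (S' k) (S' (Suc (Suc k)))"
    and rmin: "\<And>k e. k < n \<Longrightarrow> e < S (Suc (Suc k)) \<Longrightarrow> \<not> R (S k) e"
    and rmin': "\<And>k e. k < n \<Longrightarrow> e < S' (Suc (Suc k)) \<Longrightarrow> \<not> R (S' k) e"
  shows "\<forall>k\<le>Suc n. S k = S' k"
proof -
  have "k \<le> Suc n \<longrightarrow> S k = S' k" for k
  proof (induction k rule: less_induct)
    case (less k)
    show ?case
    proof (intro impI)
      assume k: "k \<le> Suc n"
      show "S k = S' k"
      proof (cases "k \<le> 1")
        case True then show ?thesis using S0 S1 by (cases k) auto
      next
        case False
        define j where "j = k - 2"
        have kj: "k = Suc (Suc j)" using False j_def by simp
        have jn: "j < n" using kj k by simp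
        have e: "S j = S' j" using less.IH[of j] kj k by simp
        have "\<not> S k < S' k"
        proof
          assume "S k < S' k"
          then show False using rmin'[OF jn, of "S k"] rR[OF jn] e kj by auto
        qed
        moreover have "\<not> S' k < S k"
        proof
          assume "S' k < S k"
          then show False using rmin[OF jn, of "S' k"] rR'[OF jn] e kj by auto
        qed
        ultimately show ?thesis by simp
      qed
    qed
  qed
  then show ?thesis by blast
qed


lemma left_dec_facts:
  assumes "left_dec Q n q us"
  shows "length us = Suc n" and "plen (us ! 0) = 1" and "\<And>i. i \<le> n \<Longrightarrow> us ! i \<in> basis Q"
    and "\<And>i. i < n \<Longrightarrow> inI Q (cat (us ! i) (us ! Suc i))"
    and "\<And>i k. i < n \<Longrightarrow> 0 < k \<Longrightarrow> k \<le> plen (cat (us ! i) (us ! Suc i)) \<Longrightarrow>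
           \<not> inI Q (subpath Q (cat (us ! i) (us ! Suc i)) k (plen (cat (us ! i) (us ! Suc i))))"
    and "q = catl us"
  using assms unfolding left_dec_def by blast+

lemma left_dec_chain: "left_dec Q n q us \<Longrightarrow> chainL Q us \<and> us \<noteq> [] \<and> q = catl us"
  unfolding left_dec_def chainL_def by auto

lemma left_basic:
  assumes ld: "left_dec Q n q us"
  defines "E \<equiv> Epos us"
  shows "\<And>i. i\<le>n \<Longrightarrow> us ! i = subpath Q q (E (Suc i)) (E i)" and "E 0 = plen q" and "E (Suc n) = 0"
     and "E 0 = Suc (E 1)" and "\<And>i j. i \<le> j \<Longrightarrow> E j \<le> E i" and "\<And>i. E i \<le> plen q"
proof -
  have c: "chainL Q us" "us \<noteq> []" "q = catl us" using left_dec_chain[OF ld] by auto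
  have len: "length us = Suc n" using left_dec_facts(1)[OF ld] .
  have d: "\<forall>i\<le>n. us ! i = subpath Q q (E (Suc i)) (E i)" using decomp[OF c(1,2)] c(3) len E_def by auto
  have e0: "E 0 = plen q" using Epos_0[OF c(2)] c(3) E_def by simp
  have en: "E (Suc n) = 0" using Epos_len[of us] len E_def by simp
  have "E 0 = plen (us ! 0) + E 1" using Epos_Suc[of 0 us] len E_def by simp
  then have e1: "E 0 = Suc (E 1)" using left_dec_facts(2)[OF ld] by simp
  show "\<And>i. i\<le>n \<Longrightarrow> us ! i = subpath Q q (E (Suc i)) (E i)" using d by blast
  show "E 0 = plen q" by (rule e0)
  show "E (Suc n) = 0" by (rule en)
  show "E 0 = Suc (E 1)" by (rule e1)
  show "\<And>i j. i \<le> j \<Longrightarrow> E j \<le> E i" using Epos_mono E_def by blast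
  show "\<And>i. E i \<le> plen q" using Epos_mono[of 0 _ us] e0 E_def by simp
qed

lemma left_pos:
  assumes ld: "left_dec Q n q us"
  and T_def: "T = (\<lambda>j. Epos us (Suc n - j))"
  and R_def: "R = (\<lambda>a b. inI Q (subpath Q q a b))"
  shows "T 0 = 0" and "Suc (T n) = plen q" and "T (Suc n) = plen q"
    and "\<And>i. i\<le>n \<Longrightarrow> T i \<le> T (Suc i)"
    and "\<And>i. i<n \<Longrightarrow> R (T i) (T (Suc (Suc i)))"
    and "\<And>i s. i < n \<Longrightarrow> T i < s \<Longrightarrow> s \<le> T (Suc (Suc i)) \<Longrightarrow> \<not> R s (T (Suc (Suc i)))"
    and "\<And>i. i\<le>n \<Longrightarrow> \<not> R (T i) (T (Suc i))"
proof -
  define E where "E = Epos us"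
  note lb = left_basic[OF ld, folded E_def]
  have T_def: "T = (\<lambda>j. E (Suc n - j))" using T_def E_def by simp
  have Eb: "E i \<le> plen q" for i using lb(6) by blast
  have T0: "T 0 = 0" using lb(3) T_def by simp
  have Tn: "Suc (T n) = plen q" using lb(2,4) T_def by simp
  have TL: "T (Suc n) = plen q" using lb(2) T_def by simp
  have Tm: "\<forall>i\<le>n. T i \<le> T (Suc i)" using lb(5) T_def by simp
  have cat_eq: "cat (us ! k) (us ! Suc k) = subpath Q q (E (Suc (Suc k))) (E k)" if "k < n" for k
  proof -
    have "us ! k = subpath Q q (E (Suc k)) (E k)" "us ! Suc k = subpath Q q (E (Suc (Suc k))) (E (Suc k))"
      using lb(1) that by auto
    then show ?thesis using cat_subpath[of "E (Suc (Suc k))" "E (Suc k)" "E k" q Q] lb(5)[of k "Suc k"] lb(5)[of "Suc k" "Suc (Suc k)"] Eb[of k] by simp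
  qed
  have lR: "\<forall>i<n. R (T i) (T (Suc (Suc i)))"
  proof (intro allI impI)
    fix i assume i: "i < n"
    define k where "k = n - Suc i"
    have k: "k < n" "Suc n - i = Suc (Suc k)" "Suc n - Suc (Suc i) = k" using i k_def by auto
    have "inI Q (cat (us ! k) (us ! Suc k))" using left_dec_facts(4)[OF ld k(1)] .
    then show "R (T i) (T (Suc (Suc i)))" using cat_eq[OF k(1)] k R_def T_def by simp
  qed
  have lmin: "\<forall>i s. i < n \<longrightarrow> T i < s \<longrightarrow> s \<le> T (Suc (Suc i)) \<longrightarrow> \<not> R s (T (Suc (Suc i)))"
  proof (intro allI impI)
    fix i s assume i: "i < n" and s: "T i < s" "s \<le> T (Suc (Suc i))"
    define k where "k = n - Suc i"
    have k: "k < n" "Suc n - i = Suc (Suc k)" "Suc n - Suc (Suc i) = k" using i k_def by auto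
    let ?c = "cat (us ! k) (us ! Suc k)"
    have ab: "E (Suc (Suc k)) < s" "s \<le> E k" using s k T_def by auto
    have ab2: "E (Suc (Suc k)) \<le> E k" using lb(5) by simp
    have pc: "plen ?c = E k - E (Suc (Suc k))" using cat_eq[OF k(1)] Eb by (simp add: plen_subpath)
    have "\<not> inI Q (subpath Q ?c (s - E (Suc (Suc k))) (plen ?c))"
      using left_dec_facts(5)[OF ld k(1), of "s - E (Suc (Suc k))"] ab pc by simp
    moreover have "subpath Q ?c (s - E (Suc (Suc k))) (plen ?c) = subpath Q q s (E k)"
      using cat_eq[OF k(1)] subpath_subpath[of "E (Suc (Suc k))" "E k" q "s - E (Suc (Suc k))" "E k - E (Suc (Suc k))" Q]
        ab ab2 pc Eb[of k] by simp
    ultimately show "\<not> R s (T (Suc (Suc i)))" using k R_def T_def by simp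
  qed
  have lB: "\<forall>i\<le>n. \<not> R (T i) (T (Suc i))"
  proof (intro allI impI)
    fix i assume i: "i \<le> n"
    have "us ! (n - i) \<in> basis Q" using left_dec_facts(3)[OF ld, of "n - i"] by simp
    moreover have "us ! (n - i) = subpath Q q (E (Suc (n - i))) (E (n - i))" using lb(1) i by simp
    moreover have "T i = E (Suc (n - i))" "T (Suc i) = E (n - i)" using i T_def by (simp_all add: Suc_diff_le)
    ultimately show "\<not> R (T i) (T (Suc i))" using R_def by (simp add: basis_def)
  qed
  show "T 0 = 0" by (rule T0)
  show "Suc (T n) = plen q" by (rule Tn)
  show "T (Suc n) = plen q" by (rule TL)
  show "\<And>i. i\<le>n \<Longrightarrow> T i \<le> T (Suc i)" using Tm by blast
  show "\<And>i. i<n \<Longrightarrow> R (T i) (T (Suc (Suc i)))" using lR by blast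
  show "\<And>i s. i < n \<Longrightarrow> T i < s \<Longrightarrow> s \<le> T (Suc (Suc i)) \<Longrightarrow> \<not> R s (T (Suc (Suc i)))" using lmin by blast
  show "\<And>i. i\<le>n \<Longrightarrow> \<not> R (T i) (T (Suc i))" using lB by blast
qed

lemma left_dec_unique:
  assumes ld: "left_dec Q n q us" and ld': "left_dec Q n q us'"
  shows "us = us'"
proof -
  define T where "T = (\<lambda>j. Epos us (Suc n - j))"
  define T' where "T' = (\<lambda>j. Epos us' (Suc n - j))"
  define R where "R = (\<lambda>a b. inI Q (subpath Q q a b))"
  note p = left_pos[OF ld T_def R_def]
  note p' = left_pos[OF ld' T'_def R_def]
  have eq: "\<forall>j\<le>Suc n. T j = T' j"
    apply (rule left_pos_unique[of T n T' R])
    using p(2) p'(2) apply simp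
    using p(3) p'(3) apply simp
    using p(4) apply blast
    using p'(4) apply blast
    using p(5) apply blast
    using p'(5) apply blast
    using p(6) apply blast
    using p'(6) apply blast
    done
  have E: "Epos us i = Epos us' i" if "i \<le> Suc n" for i
    using eq[rule_format, of "Suc n - i"] that T_def T'_def by simp
  have len: "length us = Suc n" "length us' = Suc n" using left_dec_facts(1)[OF ld] left_dec_facts(1)[OF ld'] by auto
  show ?thesis
  proof (rule nth_equalityI)
    show "length us = length us'" using len by simp
    fix i assume i: "i < length us"
    then have "i \<le> n" using len by simp
    then show "us ! i = us' ! i" using left_basic(1)[OF ld \<open>i \<le> n\<close>] left_basic(1)[OF ld' \<open>i \<le> n\<close>] E[of i] E[of "Suc i"] by simp
  qed
qed


lemma right_dec_facts:
  assumes "right_dec Q n q vs"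
  shows "length vs = Suc n" and "plen (vs ! 0) = 1" and "\<And>i. i \<le> n \<Longrightarrow> vs ! i \<in> basis Q"
    and "\<And>i. i < n \<Longrightarrow> composable Q (vs ! Suc i) (vs ! i)"
    and "\<And>i. i < n \<Longrightarrow> inI Q (cat (vs ! Suc i) (vs ! i))"
    and "\<And>i k. i < n \<Longrightarrow> k < plen (cat (vs ! Suc i) (vs ! i)) \<Longrightarrow>
           \<not> inI Q (subpath Q (cat (vs ! Suc i) (vs ! i)) 0 k)"
    and "q = catl (rev vs)"
  using assms unfolding right_dec_def by blast+

lemma left_dec_valid:
  assumes "left_dec Q n q us" shows "valid Q q"
proof -
  have "\<forall>u\<in>set us. valid Q u"
  proof
    fix u assume "u \<in> set us"
    then obtain i where i: "i < length us" "us ! i = u" by (auto simp: in_set_conv_nth)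
    then have "i \<le> n" using left_dec_facts(1)[OF assms] by simp
    then have "us ! i \<in> basis Q" using left_dec_facts(3)[OF assms] by blast
    then show "valid Q u" using i by (simp add: basis_def)
  qed
  moreover have "chainL Q us" "us \<noteq> []" "q = catl us" using left_dec_chain[OF assms] by auto
  ultimately show ?thesis using valid_catl by simp
qed

lemma Gamma_valid: "q \<in> Gamma Q n \<Longrightarrow> valid Q q"
  unfolding Gamma_def using left_dec_valid by blast

lemma Gamma_plen: assumes "q \<in> Gamma Q n" shows "plen q \<ge> 1"
proof -
  obtain us where ld: "left_dec Q n q us" using assms unfolding Gamma_def by blast
  have "Epos us 0 = plen (us ! 0) + Epos us 1" using Epos_Suc[of 0 us] left_dec_facts(1)[OF ld] by simp
  then show ?thesis using left_basic(2)[OF ld] left_dec_facts(2)[OF ld] by simp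
qed

lemma Gamma_inI: assumes "q \<in> Gamma Q n" "n \<ge> 1" shows "inI Q q"
proof -
  obtain us where ld: "left_dec Q n q us" using assms unfolding Gamma_def by blast
  define E where "E = Epos us"
  note lb = left_basic[OF ld, folded E_def]
  have "us ! 0 = subpath Q q (E 1) (E 0)" "us ! 1 = subpath Q q (E 2) (E 1)"
    using lb(1)[of 0] lb(1)[of 1] assms(2) by (simp_all add: numeral_2_eq_2)
  then have "cat (us ! 0) (us ! 1) = subpath Q q (E 2) (E 0)"
    using cat_subpath[of "E 2" "E 1" "E 0" q Q] lb(5)[of 0 1] lb(5)[of 1 2] lb(6)[of 0] by simp
  moreover have "inI Q (cat (us ! 0) (us ! Suc 0))" using left_dec_facts(4)[OF ld, of 0] assms(2) by simp
  ultimately have "inI Q (subpath Q q (E 2) (E 0))" by simp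
  then have "inI Q (subpath Q q 0 (plen q))"
    using inI_mono[of Q q "E 2" "E 0" 0 "plen q"] lb(5)[of 0 2] lb(6)[of 0] by simp
  then show ?thesis by (simp add: subpath_full)
qed

lemma catl_consec:
  assumes mono: "\<And>k. a \<le> k \<Longrightarrow> k < b \<Longrightarrow> S k \<le> S (Suc k)" and Sb: "S b \<le> plen q" and ab: "a < b"
  shows "catl (rev (map (\<lambda>k. subpath Q q (S k) (S (Suc k))) [a..<b])) = subpath Q q (S a) (S b)"
  using ab mono Sb
proof (induction b)
  case 0 then show ?case by simp
next
  case (Suc b)
  show ?case
  proof (cases "a = b")
    case True then show ?thesis by simp
  next
    case False
    then have ab: "a < b" using Suc by simp
    have Sab: "S a \<le> S b"
    proof -
      have "\<forall>k. a + k \<le> b \<longrightarrow> S a \<le> S (a + k)"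
      proof (intro allI)
        fix k show "a + k \<le> b \<longrightarrow> S a \<le> S (a + k)"
          using Suc.prems(2) by (induction k) (auto intro: order_trans)
      qed
      moreover have "a + (b - a) \<le> b" using ab by simp
      ultimately have "S a \<le> S (a + (b - a))" by blast
      then show ?thesis using ab by simp
    qed
    have Sb: "S b \<le> plen q" using Suc.prems(2)[of b] Suc.prems(3) ab by simp
    have IH: "catl (rev (map (\<lambda>k. subpath Q q (S k) (S (Suc k))) [a..<b])) = subpath Q q (S a) (S b)"
      using Suc.IH[OF ab] Suc.prems(2) Sb by simp
    have "rev (map (\<lambda>k. subpath Q q (S k) (S (Suc k))) [a..<Suc b]) =
          subpath Q q (S b) (S (Suc b)) # rev (map (\<lambda>k. subpath Q q (S k) (S (Suc k))) [a..<b])"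
      using ab by simp
    moreover have "rev (map (\<lambda>k. subpath Q q (S k) (S (Suc k))) [a..<b]) \<noteq> []" using ab by simp
    ultimately have "catl (rev (map (\<lambda>k. subpath Q q (S k) (S (Suc k))) [a..<Suc b])) =
        cat (subpath Q q (S b) (S (Suc b))) (subpath Q q (S a) (S b))"
      using IH by (simp add: catl_Cons)
    also have "\<dots> = subpath Q q (S a) (S (Suc b))"
      using cat_subpath[OF Sab Suc.prems(2)[of b] Suc.prems(3)] ab by simp
    finally show ?thesis .
  qed
qed


lemma inI_plen:
  assumes mq: "monomial_quiver Q" and i: "inI Q p" shows "plen p \<ge> 2"
proof -
  obtain i j where "i \<le> j" "j \<le> plen p" "subpath Q p i j \<in> rels Q" using i unfolding inI_def by blast
  moreover have "plen (subpath Q p i j) \<le> plen p" by (simp add: subpath_def plen_def)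
  ultimately show ?thesis using mq unfolding monomial_quiver_def by fastforce
qed

lemma R_mono:
  assumes mq: "monomial_quiver Q"
  shows "\<And>a b c d. c \<le> a \<Longrightarrow> b \<le> d \<Longrightarrow> d \<le> plen q \<Longrightarrow> inI Q (subpath Q q a b) \<Longrightarrow> inI Q (subpath Q q c d)"
proof -
  fix a b c d assume h: "c \<le> a" "b \<le> d" "d \<le> plen q" "inI Q (subpath Q q a b)"
  have "a \<le> b"
  proof (rule ccontr)
    assume "\<not> a \<le> b"
    then have "plen (subpath Q q a b) = 0" by (simp add: subpath_def plen_def)
    then show False using inI_plen[OF mq h(4)] by simp
  qed
  then show "inI Q (subpath Q q c d)" using inI_mono[OF h(4) h(1) _ h(2,3)] by simp
qed

lemma mono_upto:
  fixes f :: "nat \<Rightarrow> nat"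
  assumes "\<And>k. k < m \<Longrightarrow> f k \<le> f (Suc k)" "i \<le> j" "j \<le> m"
  shows "f i \<le> f j"
  using assms(2,3)
proof (induction j)
  case 0 then show ?case by simp
next
  case (Suc j)
  then show ?case using assms(1)[of j] by (cases "i = Suc j") auto
qed

lemma right_exists:
  assumes mq: "monomial_quiver Q" and ld: "left_dec Q n q us" and n: "n \<ge> 1"
  shows "\<exists>vs. right_dec Q n q vs"
proof -
  define T where "T = (\<lambda>j. Epos us (Suc n - j))"
  define R where "R = (\<lambda>a b. inI Q (subpath Q q a b))"
  note p = left_pos[OF ld T_def R_def]
  have vq: "valid Q q" using left_dec_valid[OF ld] .
  have mono: "\<And>a b c d. c \<le> a \<Longrightarrow> b \<le> d \<Longrightarrow> d \<le> plen q \<Longrightarrow> R a b \<Longrightarrow> R c d"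
    using R_mono[OF mq] R_def by blast
  define S where "S = rseq R"
  have rl: "S 0 = 0 \<and> S 1 = 1 \<and> S (Suc n) = plen q \<and> (\<forall>k\<le>n. S k < S (Suc k))
     \<and> (\<forall>k<n. R (S k) (S (Suc (Suc k))) \<and> (\<forall>e. e < S (Suc (Suc k)) \<longrightarrow> \<not> R (S k) e))
     \<and> (\<forall>k\<le>n. \<not> R (S k) (S (Suc k)))" unfolding S_def
    apply (rule right_from_left[of "plen q" R n T])
    using mono n p(1-7) by blast+
  have S0: "S 0 = 0" and S1: "S 1 = 1" and SL: "S (Suc n) = plen q"
    and Sinc: "\<And>k. k \<le> n \<Longrightarrow> S k < S (Suc k)"
    and SR: "\<And>k. k < n \<Longrightarrow> R (S k) (S (Suc (Suc k)))"
    and Smin: "\<And>k e. k < n \<Longrightarrow> e < S (Suc (Suc k)) \<Longrightarrow> \<not> R (S k) e"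
    and SB: "\<And>k. k \<le> n \<Longrightarrow> \<not> R (S k) (S (Suc k))"
    using rl by blast+
  have Sm: "S i \<le> S j" if "i \<le> j" "j \<le> Suc n" for i j
  proof (rule mono_upto[of "Suc n" S i j])
    fix k assume "k < Suc n" then show "S k \<le> S (Suc k)" using Sinc[of k] by simp
  qed (use that in auto)
  have Sb: "S k \<le> plen q" if "k \<le> Suc n" for k using Sm[OF that] SL by simp
  define vs where "vs = map (\<lambda>k. subpath Q q (S k) (S (Suc k))) [0..<Suc n]"
  have vsk: "vs ! k = subpath Q q (S k) (S (Suc k))" if "k \<le> n" for k
    using that vs_def by (simp del: upt_Suc)
  have len: "length vs = Suc n" using vs_def by simp
  have c1: "plen (vs ! 0) = 1" using vsk[of 0] S0 S1 Sb[of 1] by (simp add: plen_subpath)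
  have c2: "\<forall>i\<le>n. vs ! i \<in> basis Q"
  proof (intro allI impI)
    fix i assume i: "i \<le> n"
    have "valid Q (vs ! i)" using vsk[OF i] valid_subpath[OF mq vq] Sm[of i "Suc i"] Sb[of "Suc i"] i by simp
    moreover have "\<not> inI Q (vs ! i)" using vsk[OF i] SB[OF i] R_def by simp
    ultimately show "vs ! i \<in> basis Q" by (simp add: basis_def)
  qed
  have cateq: "cat (vs ! Suc i) (vs ! i) = subpath Q q (S i) (S (Suc (Suc i)))" if "i < n" for i
    using vsk[of i] vsk[of "Suc i"] that cat_subpath[of "S i" "S (Suc i)" "S (Suc (Suc i))" q Q]
      Sm[of i "Suc i"] Sm[of "Suc i" "Suc (Suc i)"] Sb[of "Suc (Suc i)"] by simp
  have c3: "\<forall>i<n. composable Q (vs ! Suc i) (vs ! i) \<and> inI Q (cat (vs ! Suc i) (vs ! i)) \<and>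
        (\<forall>k. k < plen (cat (vs ! Suc i) (vs ! i)) \<longrightarrow>
           \<not> inI Q (subpath Q (cat (vs ! Suc i) (vs ! i)) 0 k))"
  proof (intro allI impI conjI)
    fix i assume i: "i < n"
    have b1: "S i \<le> S (Suc i)" "S (Suc i) \<le> plen q" using Sm[of i "Suc i"] Sb[of "Suc i"] i by auto
    show "composable Q (vs ! Suc i) (vs ! i)"
      using vsk[of i] vsk[of "Suc i"] i b1 by (simp add: composable_def pend_subpath pstart_subpath)
    show "inI Q (cat (vs ! Suc i) (vs ! i))" using cateq[OF i] SR[OF i] R_def by simp
    fix k assume k: "k < plen (cat (vs ! Suc i) (vs ! i))"
    have b2: "S i \<le> S (Suc (Suc i))" "S (Suc (Suc i)) \<le> plen q"
      using Sm[of i "Suc (Suc i)"] Sb[of "Suc (Suc i)"] i by auto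
    have pc: "plen (cat (vs ! Suc i) (vs ! i)) = S (Suc (Suc i)) - S i"
      using cateq[OF i] b2 by (simp add: plen_subpath)
    have "subpath Q (cat (vs ! Suc i) (vs ! i)) 0 k = subpath Q q (S i) (S i + k)"
      using cateq[OF i] subpath_subpath[of "S i" "S (Suc (Suc i))" q 0 k Q] b2 k pc by simp
    moreover have "S i + k < S (Suc (Suc i))" using k pc by simp
    ultimately show "\<not> inI Q (subpath Q (cat (vs ! Suc i) (vs ! i)) 0 k)"
      using Smin[OF i] R_def by simp
  qed
  have c4: "q = catl (rev vs)"
  proof -
    have "catl (rev vs) = subpath Q q (S 0) (S (Suc n))"
      unfolding vs_def by (rule catl_consec) (use Sm Sb in auto)
    then show ?thesis using S0 SL by (simp add: subpath_full)
  qed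
  have "right_dec Q n q vs" unfolding right_dec_def using len c1 c2 c3 c4 by blast
  then show ?thesis by blast
qed


lemma right_pos:
  assumes mq: "monomial_quiver Q" and rd: "right_dec Q n q vs"
    and S_def: "S = (\<lambda>k. Epos (rev vs) (Suc n - k))"
    and R_def: "R = (\<lambda>a b. inI Q (subpath Q q a b))"
  shows "S 0 = 0" and "S 1 = 1" and "\<And>k. k \<le> n \<Longrightarrow> vs ! k = subpath Q q (S k) (S (Suc k))"
    and "\<And>k. k < n \<Longrightarrow> R (S k) (S (Suc (Suc k)))"
    and "\<And>k e. k < n \<Longrightarrow> e < S (Suc (Suc k)) \<Longrightarrow> \<not> R (S k) e"
proof -
  define E where "E = Epos (rev vs)"
  have S_def: "S = (\<lambda>k. E (Suc n - k))" using S_def E_def by simp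
  note rf = right_dec_facts[OF rd]
  have len: "length (rev vs) = Suc n" using rf(1) by simp
  have ne: "rev vs \<noteq> []" using len by auto
  have ch: "chainL Q (rev vs)"
    unfolding chainL_def
  proof (intro allI impI)
    fix i assume i: "Suc i < length (rev vs)"
    define j where "j = n - Suc i"
    have j: "j < n" "Suc j = n - i" using i len j_def by auto
    have "rev vs ! i = vs ! (n - i)" "rev vs ! Suc i = vs ! j" using i len j_def rf(1) by (auto simp: rev_nth)
    then show "composable Q (rev vs ! i) (rev vs ! Suc i)" using rf(4)[OF j(1)] j(2) by simp
  qed
  have dc: "\<forall>i<length (rev vs). rev vs ! i = subpath Q q (E (Suc i)) (E i)"
    using decomp[OF ch ne] rf(7) E_def by simp
  have E0: "E 0 = plen q" using Epos_0[OF ne] rf(7) E_def by simp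
  have EL: "E (Suc n) = 0" using Epos_len[of "rev vs"] len E_def by simp
  have Em: "\<And>i j. i \<le> j \<Longrightarrow> E j \<le> E i" using Epos_mono E_def by blast
  have Eb: "\<And>i. E i \<le> plen q" using Em[of 0] E0 by simp
  show "S 0 = 0" using S_def EL by simp
  have vsk: "vs ! k = subpath Q q (S k) (S (Suc k))" if k: "k \<le> n" for k
  proof -
    have "rev vs ! (n - k) = vs ! k" using k len rf(1) by (simp add: rev_nth)
    moreover have "rev vs ! (n - k) = subpath Q q (E (Suc (n - k))) (E (n - k))" using dc k len by simp
    moreover have "S k = E (Suc (n - k))" "S (Suc k) = E (n - k)" using S_def k by (simp_all add: Suc_diff_le)
    ultimately show ?thesis by simp
  qed
  show "\<And>k. k \<le> n \<Longrightarrow> vs ! k = subpath Q q (S k) (S (Suc k))" using vsk by blast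
  have "E n = plen (rev vs ! n) + E (Suc n)" using Epos_Suc[of n "rev vs"] len E_def by simp
  moreover have "rev vs ! n = vs ! 0" using len rf(1) by (simp add: rev_nth)
  ultimately show S1: "S 1 = 1" using S_def EL rf(2) by simp
  have Sm: "S k \<le> S (Suc k)" for k using S_def Em by simp
  have cateq: "cat (vs ! Suc k) (vs ! k) = subpath Q q (S k) (S (Suc (Suc k)))" if k: "k < n" for k
    using vsk[of k] vsk[of "Suc k"] k cat_subpath[of "S k" "S (Suc k)" "S (Suc (Suc k))" q Q] Sm[of k]
      Sm[of "Suc k"] Eb S_def by simp
  show "\<And>k. k < n \<Longrightarrow> R (S k) (S (Suc (Suc k)))" using cateq rf(5) R_def by simp
  show "\<And>k e. k < n \<Longrightarrow> e < S (Suc (Suc k)) \<Longrightarrow> \<not> R (S k) e"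
  proof -
    fix k e assume k: "k < n" and e: "e < S (Suc (Suc k))"
    show "\<not> R (S k) e"
    proof (cases "e < S k")
      case True
      then have "plen (subpath Q q (S k) e) = 0" by (simp add: subpath_def plen_def)
      then have "\<not> inI Q (subpath Q q (S k) e)" using inI_plen[OF mq, of "subpath Q q (S k) e"] by auto
      then show ?thesis using R_def by simp
    next
      case False
      have b2: "S k \<le> S (Suc (Suc k))" "S (Suc (Suc k)) \<le> plen q" using Sm[of k] Sm[of "Suc k"] Eb S_def by auto
      have pc: "plen (cat (vs ! Suc k) (vs ! k)) = S (Suc (Suc k)) - S k"
        using cateq[OF k] b2 by (simp add: plen_subpath)
      have "subpath Q (cat (vs ! Suc k) (vs ! k)) 0 (e - S k) = subpath Q q (S k) e"
        using cateq[OF k] subpath_subpath[of "S k" "S (Suc (Suc k))" q 0 "e - S k" Q] b2 e False pc by simp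
      moreover have "e - S k < plen (cat (vs ! Suc k) (vs ! k))" using pc e False by simp
      ultimately show ?thesis using rf(6)[OF k, of "e - S k"] R_def by simp
    qed
  qed
qed

lemma right_dec_unique:
  assumes mq: "monomial_quiver Q" and rd: "right_dec Q n q vs" and rd': "right_dec Q n q vs'"
  shows "vs = vs'"
proof -
  define S where "S = (\<lambda>k. Epos (rev vs) (Suc n - k))"
  define S' where "S' = (\<lambda>k. Epos (rev vs') (Suc n - k))"
  define R where "R = (\<lambda>a b. inI Q (subpath Q q a b))"
  note p = right_pos[OF mq rd S_def R_def]
  note p' = right_pos[OF mq rd' S'_def R_def]
  have eq: "\<forall>k\<le>Suc n. S k = S' k"
    apply (rule right_pos_unique[of S S' n R])
    using p(1,2) p'(1,2) apply simp
    using p(2) p'(2) apply simp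
    using p(4) apply blast
    using p'(4) apply blast
    using p(5) apply blast
    using p'(5) apply blast
    done
  have len: "length vs = Suc n" "length vs' = Suc n" using right_dec_facts(1)[OF rd] right_dec_facts(1)[OF rd'] by auto
  show ?thesis
  proof (rule nth_equalityI)
    show "length vs = length vs'" using len by simp
    fix i assume "i < length vs"
    then have i: "i \<le> n" using len by simp
    show "vs ! i = vs' ! i" using p(3)[OF i] p'(3)[OF i] eq i by simp
  qed
qed

lemma the_left:
  assumes "left_dec Q n q us" shows "(THE us. left_dec Q n q us) = us"
  using assms left_dec_unique by blast

lemma the_right:
  assumes mq: "monomial_quiver Q" and ld: "left_dec Q n q us" and n: "n \<ge> 1"
  shows "right_dec Q n q (THE vs. right_dec Q n q vs)"
proof -
  obtain vs where "right_dec Q n q vs" using right_exists[OF mq ld n] by blast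
  then show ?thesis using right_dec_unique[OF mq] by (metis theI)
qed

lemma pi_prefix:
  assumes mq: "monomial_quiver Q" and g: "q \<in> Gamma Q n" and n: "n \<ge> 1"
  shows "snd q = snd (pi Q n (n - 1) q) @ drop (plen (pi Q n (n - 1) q)) (snd q)"
    and "plen (pi Q n (n - 1) q) \<le> plen q"
proof -
  obtain us where ld: "left_dec Q n q us" using g unfolding Gamma_def by blast
  define vs where "vs = (THE vs. right_dec Q n q vs)"
  have rd: "right_dec Q n q vs" using the_right[OF mq ld n] vs_def by simp
  have len: "length vs = Suc n" using right_dec_facts(1)[OF rd] .
  have P: "pi Q n (n - 1) q = catl (rev (take n vs))" using n vs_def by (simp add: pi_def)
  have e: "vs = take n vs @ [vs ! n]" using len by (simp add: take_Suc_conv_app_nth[symmetric])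
  have r: "rev vs = vs ! n # rev (take n vs)" using arg_cong[OF e, of rev] by simp
  have ne: "rev (take n vs) \<noteq> []" using n len by (cases vs) auto
  have "catl (rev vs) = cat (vs ! n) (catl (rev (take n vs)))" unfolding r using ne by (rule catl_Cons)
  then have eq: "q = cat (vs ! n) (pi Q n (n - 1) q)" using right_dec_facts(7)[OF rd] P by simp
  have sq: "snd q = snd (pi Q n (n - 1) q) @ snd (vs ! n)"
    using arg_cong[OF eq, of snd] by (simp add: cat_def)
  then show "snd q = snd (pi Q n (n - 1) q) @ drop (plen (pi Q n (n - 1) q)) (snd q)" by (simp add: plen_def)
  show "plen (pi Q n (n - 1) q) \<le> plen q" using sq by (simp add: plen_def)
qed

lemma sigma_suffix:
  assumes g: "q \<in> Gamma Q n" and n: "n \<ge> 1"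
  shows "snd q = take (plen q - plen (sigma Q n (n - 1) q)) (snd q) @ snd (sigma Q n (n - 1) q)"
    and "plen (sigma Q n (n - 1) q) \<le> plen q"
proof -
  obtain us where ld: "left_dec Q n q us" using g unfolding Gamma_def by blast
  have len: "length us = Suc n" using left_dec_facts(1)[OF ld] .
  have S: "sigma Q n (n - 1) q = catl (take n us)" using n the_left[OF ld] by (simp add: sigma_def)
  have "us = take n us @ [us ! n]" using len by (simp add: take_Suc_conv_app_nth[symmetric])
  moreover have "take n us \<noteq> []" using n len by (cases us) auto
  ultimately have "catl us = cat (catl (take n us)) (us ! n)" using catl_append[of "take n us" "[us ! n]"]
    by simp
  then have eq: "q = cat (sigma Q n (n - 1) q) (us ! n)" using left_dec_facts(6)[OF ld] S by simp
  have sq: "snd q = snd (us ! n) @ snd (sigma Q n (n - 1) q)"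
    using arg_cong[OF eq, of snd] by (simp add: cat_def)
  then show "snd q = take (plen q - plen (sigma Q n (n - 1) q)) (snd q) @ snd (sigma Q n (n - 1) q)"
    by (simp add: plen_def)
  show "plen (sigma Q n (n - 1) q) \<le> plen q" using sq by (simp add: plen_def)
qed


definition kap :: "('v,'a) path \<times> ('v,'a) path \<Rightarrow> 'a set \<times> 'a set" where
  "kap s = (set (snd (fst s)) - set (snd (snd s)), set (snd (snd s)) - set (snd (fst s)))"

lemma kap_split:
  assumes "snd q = as @ snd p @ cs" "snd r = as @ snd b @ cs"
    "distinct (snd q)" "distinct (snd r)"
  shows "kap (q, r) = kap (p, b)"
  using assms unfolding kap_def by auto

lemma hat_restr:
  assumes dq: "distinct (snd (cat c (cat p a)))" and dr: "distinct (snd r)"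
  shows "hat Q (\<lambda>s. if kap s = K then f s else 0) c p a r =
         (if kap (cat c (cat p a), r) = K then hat Q f c p a r else 0)"
proof -
  let ?C = "\<lambda>b. parallel Q p b \<and> composable Q b a \<and> composable Q c b \<and> cat c (cat b a) = r"
  have eq: "(if ?C b then (if kap (p, b) = K then f (p, b) else 0) else 0) =
            (if kap (cat c (cat p a), r) = K then (if ?C b then f (p, b) else 0) else 0)" for b
  proof (cases "?C b")
    case True
    then have "snd r = snd a @ snd b @ snd c" by (auto simp: cat_def)
    moreover have "snd (cat c (cat p a)) = snd a @ snd p @ snd c" by (simp add: cat_def)
    ultimately have "kap (cat c (cat p a), r) = kap (p, b)"
      using kap_split dq dr by metis
    then show ?thesis by simp
  next
    case False then show ?thesis by auto
  qed
  have "hat Q (\<lambda>s. if kap s = K then f s else 0) c p a r =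
     (\<Sum>b\<in>basis Q. if kap (cat c (cat p a), r) = K then (if ?C b then f (p, b) else 0) else 0)"
    unfolding hat_def by (rule sum.cong[OF refl]) (use eq in simp)
  also have "\<dots> = (if kap (cat c (cat p a), r) = K then hat Q f c p a r else 0)"
    unfolding hat_def by (cases "kap (cat c (cat p a), r) = K") simp_all
  finally show ?thesis .
qed

lemma kap_snd: "snd x = snd y \<Longrightarrow> kap (x, r) = kap (y, r)"
  by (simp add: kap_def)

lemma split3:
  assumes "i \<le> j" "j \<le> length xs"
  shows "take i xs @ take (j - i) (drop i xs) @ take (length xs - j) (drop j xs) = xs"
proof -
  have e: "take j xs = take i xs @ take (j - i) (drop i xs)" using take_add[of i "j - i" xs] assms by simp
  have "take (length xs - j) (drop j xs) = drop j xs" by simp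
  then have "take i xs @ take (j - i) (drop i xs) @ take (length xs - j) (drop j xs) = take j xs @ drop j xs"
    unfolding e by simp
  then show ?thesis by simp
qed

lemma basis_distinct: "triangular Q \<Longrightarrow> monomial_quiver Q \<Longrightarrow> r \<in> basis Q \<Longrightarrow> distinct (snd r)"
  using distinct_valid[of Q r] by (auto simp: basis_def)

lemma Gamma_distinct: "triangular Q \<Longrightarrow> monomial_quiver Q \<Longrightarrow> q \<in> Gamma Q N \<Longrightarrow> distinct (snd q)"
  using distinct_valid Gamma_valid by blast

lemma cobound_zero:
  assumes "\<not> (q \<in> Gamma Q N \<and> r \<in> basis Q \<and> parallel Q q r)"
  shows "cobound Q N f (q, r) = 0"
  unfolding cobound_def prod.case using assms by (rule if_not_P)

lemma cobound_odd:
  assumes "q \<in> Gamma Q N \<and> r \<in> basis Q \<and> parallel Q q r" "odd N"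
  shows "cobound Q N f (q, r) = (\<Sum>(i, j)\<in>{(i, j). i \<le> j \<and> j \<le> plen q}.
             if subpath Q q i j \<in> Gamma Q (N - 1)
             then hat Q f (subpath Q q j (plen q)) (subpath Q q i j) (subpath Q q 0 i) r
             else 0)"
  unfolding cobound_def prod.case by (subst if_P[OF assms(1)], subst if_P[OF assms(2)], rule refl)

lemma cobound_even:
  assumes "q \<in> Gamma Q N \<and> r \<in> basis Q \<and> parallel Q q r" "\<not> odd N"
  shows "cobound Q N f (q, r) =
      hat Q f (subpath Q q (plen (pi Q N (N - 1) q)) (plen q)) (pi Q N (N - 1) q) (subpath Q q 0 0) r
    - hat Q f (subpath Q q (plen q) (plen q)) (sigma Q N (N - 1) q) (subpath Q q 0 (plen q - plen (sigma Q N (N - 1) q))) r"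
  unfolding cobound_def prod.case Let_def by (subst if_P[OF assms(1)], subst if_not_P[OF assms(2)], rule refl)

lemma cobound_restr:
  assumes mq: "monomial_quiver Q" and tr: "triangular Q" and N: "N \<ge> 1"
  shows "cobound Q N (\<lambda>s. if kap s = K then f s else 0) (q, r) =
         (if kap (q, r) = K then cobound Q N f (q, r) else 0)"
proof (cases "q \<in> Gamma Q N \<and> r \<in> basis Q \<and> parallel Q q r")
  case False
  have "cobound Q N (\<lambda>s. if kap s = K then f s else 0) (q, r) = 0" "cobound Q N f (q, r) = 0"
    using cobound_zero[OF False] by blast+
  then show ?thesis by simp
next
  case G: True
  have dq: "distinct (snd q)" using Gamma_distinct[OF tr mq] G by blast
  have dr: "distinct (snd r)" using basis_distinct[OF tr mq] G by blast
  define fK where "fK = (\<lambda>s. if kap s = K then f s else 0)"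
  show ?thesis
  proof (cases "odd N")
    case odd: True
    have trm: "hat Q fK (subpath Q q j (plen q)) (subpath Q q i j) (subpath Q q 0 i) r =
       (if kap (q, r) = K then hat Q f (subpath Q q j (plen q)) (subpath Q q i j) (subpath Q q 0 i) r else 0)"
      if ij: "i \<le> j" "j \<le> plen q" for i j
    proof -
      have sn: "snd (cat (subpath Q q j (plen q)) (cat (subpath Q q i j) (subpath Q q 0 i))) = snd q"
        using split3[of i j "snd q"] ij by (simp add: cat_def subpath_def plen_def)
      show ?thesis unfolding fK_def
        using hat_restr[of "subpath Q q j (plen q)" "subpath Q q i j" "subpath Q q 0 i" r Q K f] sn dq dr
          kap_snd[OF sn] by simp
    qed
    have "cobound Q N fK (q, r) = (\<Sum>(i, j)\<in>{(i, j). i \<le> j \<and> j \<le> plen q}.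
             if subpath Q q i j \<in> Gamma Q (N - 1)
             then (if kap (q, r) = K then hat Q f (subpath Q q j (plen q)) (subpath Q q i j) (subpath Q q 0 i) r else 0)
             else 0)"
      unfolding cobound_odd[OF G odd] by (rule sum.cong[OF refl]) (use trm in auto)
    also have "\<dots> = (if kap (q, r) = K then cobound Q N f (q, r) else 0)"
      unfolding cobound_odd[OF G odd] by (cases "kap (q, r) = K") (simp_all cong: if_cong)
    finally show ?thesis unfolding fK_def .
  next
    case even: False
    define P where "P = pi Q N (N - 1) q"
    define S where "S = sigma Q N (N - 1) q"
    have g: "q \<in> Gamma Q N" using G by blast
    have pp: "snd q = snd P @ drop (plen P) (snd q)" unfolding P_def by (rule pi_prefix(1)[OF mq g N])
    have ss: "snd q = take (plen q - plen S) (snd q) @ snd S" unfolding S_def by (rule sigma_suffix(1)[OF g N])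
    have "snd (cat (subpath Q q (plen P) (plen q)) (cat P (subpath Q q 0 0))) = snd P @ drop (plen P) (snd q)"
      by (simp add: cat_def subpath_def plen_def)
    also have "\<dots> = snd q" by (rule pp[symmetric])
    finally have sP: "snd (cat (subpath Q q (plen P) (plen q)) (cat P (subpath Q q 0 0))) = snd q" .
    have "snd (cat (subpath Q q (plen q) (plen q)) (cat S (subpath Q q 0 (plen q - plen S)))) =
        take (plen q - plen S) (snd q) @ snd S"
      by (simp add: cat_def subpath_def plen_def)
    also have "\<dots> = snd q" by (rule ss[symmetric])
    finally have sS: "snd (cat (subpath Q q (plen q) (plen q)) (cat S (subpath Q q 0 (plen q - plen S)))) = snd q" .
    have t1: "hat Q fK (subpath Q q (plen P) (plen q)) P (subpath Q q 0 0) r =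
       (if kap (q, r) = K then hat Q f (subpath Q q (plen P) (plen q)) P (subpath Q q 0 0) r else 0)"
      unfolding fK_def using hat_restr[of "subpath Q q (plen P) (plen q)" P "subpath Q q 0 0" r Q K f] sP dq dr
          kap_snd[OF sP] by simp
    have t2: "hat Q fK (subpath Q q (plen q) (plen q)) S (subpath Q q 0 (plen q - plen S)) r =
       (if kap (q, r) = K then hat Q f (subpath Q q (plen q) (plen q)) S (subpath Q q 0 (plen q - plen S)) r else 0)"
      unfolding fK_def using hat_restr[of "subpath Q q (plen q) (plen q)" S "subpath Q q 0 (plen q - plen S)" r Q K f] sS dq dr
          kap_snd[OF sS] by simp
    have "cobound Q N fK (q, r) = hat Q fK (subpath Q q (plen P) (plen q)) P (subpath Q q 0 0) r
           - hat Q fK (subpath Q q (plen q) (plen q)) S (subpath Q q 0 (plen q - plen S)) r"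
      unfolding cobound_even[OF G even] P_def S_def by (rule refl)
    also have "\<dots> = (if kap (q, r) = K then cobound Q N f (q, r) else 0)"
      unfolding t1 t2 cobound_even[OF G even] P_def[symmetric] S_def[symmetric] by simp
    finally show ?thesis unfolding fK_def .
  qed
qed


lemma valid_tail:
  assumes mq: "monomial_quiver Q" and v: "valid Q (w, \<alpha> # xs)"
  shows "valid Q (tgt Q \<alpha>, xs)"
proof -
  have "valid Q (subpath Q (w, \<alpha> # xs) 1 (Suc (length xs)))"
    using valid_subpath[OF mq v, of 1 "Suc (length xs)"] by (simp add: plen_def)
  moreover have "subpath Q (w, \<alpha> # xs) 1 (Suc (length xs)) = (tgt Q \<alpha>, xs)"
    by (simp add: subpath_def vert_at_def)
  ultimately show ?thesis by simp
qed

lemma seteq: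
  assumes tr: "triangular Q" and mq: "monomial_quiver Q"
  shows "valid Q (w, xs) \<Longrightarrow> valid Q (w, ys) \<Longrightarrow> set xs = set ys \<Longrightarrow> xs = ys"
proof (induction xs arbitrary: w ys)
  case Nil then show ?case by simp
next
  case (Cons \<alpha> xs)
  obtain \<beta> ys' where ys: "ys = \<beta> # ys'" using Cons.prems(3) by (cases ys) auto
  have sa: "src Q \<alpha> = w" using Cons.prems(1) by (simp add: valid_def)
  have sb: "src Q \<beta> = w" using Cons.prems(2) ys by (simp add: valid_def)
  have ab: "\<alpha> = \<beta>"
  proof (rule ccontr)
    assume ne: "\<alpha> \<noteq> \<beta>"
    have "\<alpha> \<in> set ys" using Cons.prems(3) by (simp only: set_simps) blast
    then have "\<alpha> \<in> set ys'" using ne ys by simp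
    then obtain k where k: "k < length ys'" "ys' ! k = \<alpha>" by (auto simp: in_set_conv_nth)
    have pl: "Suc k < plen (w, ys)" using k ys by (simp add: plen_def)
    have nth: "snd (w, ys) ! Suc k = \<alpha>" using k ys by simp
    have "src Q (snd (w, ys) ! Suc k) = vert_at Q (w, ys) (Suc k)" by (rule valid_src[OF Cons.prems(2) pl])
    then have e1: "vert_at Q (w, ys) (Suc k) = w" unfolding nth sa by simp
    have e0: "vert_at Q (w, ys) 0 = w" by (simp add: vert_at_def)
    have "vert_at Q (w, ys) 0 \<noteq> vert_at Q (w, ys) (Suc k)"
      by (rule vert_inj[OF tr mq Cons.prems(2)]) (use pl in auto)
    then show False using e0 e1 by simp
  qed
  have d1': "distinct (snd (w, \<alpha> # xs))" by (rule distinct_valid[OF tr mq Cons.prems(1)])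
  then have d1: "distinct (\<alpha> # xs)" by (simp only: snd_conv)
  have d2': "distinct (snd (w, ys))" by (rule distinct_valid[OF tr mq Cons.prems(2)])
  then have d2: "distinct (\<beta> # ys')" unfolding ys by (simp only: snd_conv)
  have e1: "set xs = set (\<alpha> # xs) - {\<alpha>}" using d1 by auto
  have e2: "set ys' = set (\<beta> # ys') - {\<beta>}" using d2 by auto
  have s3: "set xs = set ys'" unfolding e1 e2 using Cons.prems(3) ys ab by simp
  have v1: "valid Q (tgt Q \<alpha>, xs)" using valid_tail[OF mq Cons.prems(1)] .
  have v2: "valid Q (tgt Q \<alpha>, ys')" using valid_tail[OF mq, of w \<beta> ys'] Cons.prems(2) ys ab by simp
  have "xs = ys'" by (rule Cons.IH[OF v1 v2 s3])
  then show ?case using ys ab by simp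
qed

lemma reachp_imp_reach: "reachp Q u v \<Longrightarrow> reach Q u v"
  unfolding reachp_def reach_def by blast

lemma irr_good:
  fixes Q :: "('v,'a) mquiver" and x :: "('v,'a,'k::comm_ring_1) cochain"
  assumes mq: "monomial_quiver Q" and tr: "triangular Q"
    and irr: "irreducible_cocycle Q n x"
    and u: "x u \<noteq> 0" and v: "x v \<noteq> 0"
  shows "reachp Q (pstart (fst u)) (pend Q (fst v))"
proof -
  have ic: "is_cochain Q n x" and cz: "cobound Q (Suc n) x = (\<lambda>_. 0)"
    and ir: "\<And>S (\<beta> :: (('v,'a) path \<times> ('v,'a) path \<Rightarrow> 'k)). S \<subset> {s. x s \<noteq> 0} \<Longrightarrow> S \<noteq> {} \<Longrightarrow> (\<forall>s\<in>S. \<beta> s \<noteq> 0) \<Longrightarrow>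
          cobound Q (Suc n) (\<lambda>s. if s \<in> S then \<beta> s else 0) \<noteq> (\<lambda>_. 0)"
  proof -
    have irr': "is_cochain Q n x \<and> cobound Q (Suc n) x = (\<lambda>_. 0) \<and>
     (\<forall>S. S \<subset> {s. x s \<noteq> 0} \<and> S \<noteq> {} \<longrightarrow>
        (\<forall>\<beta> :: (('v,'a) path \<times> ('v,'a) path \<Rightarrow> 'k). (\<forall>s\<in>S. \<beta> s \<noteq> 0) \<longrightarrow>
           cobound Q (Suc n) (\<lambda>s. if s \<in> S then \<beta> s else 0) \<noteq> (\<lambda>_. 0)))"
      using irr unfolding irreducible_cocycle_def .
    show "is_cochain Q n x" using irr' by (rule conjunct1)
    show "cobound Q (Suc n) x = (\<lambda>_. 0)" using irr' by (rule conjunct1[OF conjunct2])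
    fix S :: "(('v,'a) path \<times> ('v,'a) path) set" and \<beta> :: "(('v,'a) path \<times> ('v,'a) path \<Rightarrow> 'k)"
    assume "S \<subset> {s. x s \<noteq> 0}" "S \<noteq> {}" "\<forall>s\<in>S. \<beta> s \<noteq> 0"
    then show "cobound Q (Suc n) (\<lambda>s. if s \<in> S then \<beta> s else 0) \<noteq> (\<lambda>_. 0)"
      using conjunct2[OF conjunct2[OF irr']] by blast
  qed
  have supp: "fst s \<in> Gamma Q n \<and> snd s \<in> basis Q \<and> parallel Q (fst s) (snd s)" if xs: "x s \<noteq> 0" for s
  proof -
    obtain p b where s: "s = (p, b)" by (cases s)
    have "x (p, b) \<noteq> 0" using xs s by simp
    then have "p \<in> Gamma Q n \<and> b \<in> basis Q \<and> parallel Q p b"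
      by (rule ic[unfolded is_cochain_def, rule_format, of p b])
    then show ?thesis using s by simp
  qed
  define K where "K = kap u"
  define S where "S = {s. x s \<noteq> 0 \<and> kap s = K}"
  have gS: "(\<lambda>s. if s \<in> S then x s else 0) = (\<lambda>s. if kap s = K then x s else 0)"
    unfolding S_def by (rule ext) auto
  have cS: "cobound Q (Suc n) (\<lambda>s. if s \<in> S then x s else 0) = (\<lambda>_. 0)"
  proof (rule ext)
    fix qr :: "('v,'a) path \<times> ('v,'a) path"
    obtain q r where qr: "qr = (q, r)" by (cases qr)
    have "cobound Q (Suc n) (\<lambda>s. if kap s = K then x s else 0) (q, r) = 0"
      using cobound_restr[OF mq tr, of "Suc n" K x q r] fun_cong[OF cz, of "(q, r)"] by simp
    then show "cobound Q (Suc n) (\<lambda>s. if s \<in> S then x s else 0) qr = 0" using gS qr by simp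
  qed
  have "\<not> (S \<subset> {s. x s \<noteq> 0})"
  proof
    assume "S \<subset> {s. x s \<noteq> 0}"
    moreover have "u \<in> S" using u K_def S_def by simp
    then have "S \<noteq> {}" by blast
    moreover have "\<forall>s\<in>S. x s \<noteq> 0" using S_def by blast
    ultimately show False using ir[of S x] cS by blast
  qed
  moreover have "S \<subseteq> {s. x s \<noteq> 0}" using S_def by blast
  ultimately have Sall: "S = {s. x s \<noteq> 0}" by blast
  have "v \<in> S" using v Sall by blast
  then have kv: "kap v = K" using S_def by blast
  show ?thesis
  proof (cases "K = ({}, {})")
    case True
    define g where "g = (\<lambda>s. if s \<in> {u} then x s else 0)"
    have cg: "cobound Q (Suc n) g = (\<lambda>_. 0)"
    proof (rule ext)
      fix qr :: "('v,'a) path \<times> ('v,'a) path"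
      obtain q r where qr: "qr = (q, r)" by (cases qr)
      have gK: "g = (\<lambda>s. if kap s = ({}, {}) then g s else 0)"
        using True K_def g_def by (auto simp: fun_eq_iff)
      have "cobound Q (Suc n) g (q, r) = 0"
      proof (cases "q \<in> Gamma Q (Suc n) \<and> r \<in> basis Q \<and> parallel Q q r")
        case False then show ?thesis by (rule cobound_zero)
      next
        case G: True
        have "kap (q, r) \<noteq> ({}, {})"
        proof
          assume "kap (q, r) = ({}, {})"
          then have se: "set (snd q) = set (snd r)" unfolding kap_def by auto
          have vq: "valid Q q" using Gamma_valid G by blast
          have vr: "valid Q r" using G by (simp add: basis_def)
          have fs: "fst q = fst r" using G by (simp add: parallel_def pstart_def)
          have v1: "valid Q (fst q, snd q)" using vq by simp
          have v2: "valid Q (fst q, snd r)" using vr fs by simp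
          have "snd q = snd r" by (rule seteq[OF tr mq v1 v2 se])
          then have "q = r" using fs by (simp add: prod_eq_iff)
          moreover have "inI Q q" using Gamma_inI[of q Q "Suc n"] G by simp
          ultimately show False using G by (simp add: basis_def)
        qed
        then show ?thesis
          using cobound_restr[OF mq tr, of "Suc n" "({}, {})" g q r] gK by simp
      qed
      then show "cobound Q (Suc n) g qr = 0" using qr by simp
    qed
    have "\<not> ({u} \<subset> {s. x s \<noteq> 0})"
    proof
      assume "{u} \<subset> {s. x s \<noteq> 0}"
      then show False using ir[of "{u}" x] cg u g_def by blast
    qed
    then have "v = u" using u v by auto
    moreover have "valid Q (fst u)" using Gamma_valid supp[OF u] by blast
    moreover have "plen (fst u) \<ge> 1" using Gamma_plen supp[OF u] by blast
    ultimately show ?thesis unfolding reachp_def by (intro exI[of _ "fst u"]) simp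
  next
    case False
    then obtain \<alpha> where a: "\<alpha> \<in> fst K \<or> \<alpha> \<in> snd K" by (cases K) auto
    have vu: "valid Q (fst u)" "valid Q (snd u)" using Gamma_valid[of "fst u" Q n] supp[OF u] by (simp_all add: basis_def)
    have vv: "valid Q (fst v)" "valid Q (snd v)" using Gamma_valid[of "fst v" Q n] supp[OF v] by (simp_all add: basis_def)
    have pu: "pstart (fst u) = pstart (snd u)" using supp[OF u] by (simp add: parallel_def)
    have pv: "pend Q (fst v) = pend Q (snd v)" using supp[OF v] by (simp add: parallel_def)
    show ?thesis
    proof (cases "\<alpha> \<in> fst K")
      case True
      then have a1: "\<alpha> \<in> set (snd (fst u))" and a2: "\<alpha> \<in> set (snd (fst v))" using K_def kv by (auto simp: kap_def)
      have r1: "reachp Q (pstart (fst u)) (tgt Q \<alpha>)" using arrow_reach[OF mq vu(1) a1] by blast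
      have r2: "reach Q (tgt Q \<alpha>) (pend Q (fst v))" using arrow_reach[OF mq vv(1) a2] by blast
      show ?thesis using reachp_reach[OF r1 r2] .
    next
      case F: False
      then have "\<alpha> \<in> snd K" using a by simp
      then have a1: "\<alpha> \<in> set (snd (snd u))" and a2: "\<alpha> \<in> set (snd (snd v))" using K_def kv by (auto simp: kap_def)
      have r1: "reachp Q (pstart (snd u)) (tgt Q \<alpha>)" using arrow_reach[OF mq vu(2) a1] by blast
      have r2: "reach Q (tgt Q \<alpha>) (pend Q (snd v))" using arrow_reach[OF mq vv(2) a2] by blast
      show ?thesis using reachp_reach[OF r1 r2] pu pv by simp
    qed
  qed
qed


lemma if_nz: "(if P then a else (0::'b::zero)) \<noteq> 0 \<Longrightarrow> a \<noteq> 0"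
  by (cases P) auto

lemma cup_extract:
  fixes Q :: "('v,'a) mquiver" and g f :: "('v,'a,'k::comm_ring_1) cochain"
  assumes mq: "monomial_quiver Q" and ne: "cup Q a b g f \<noteq> (\<lambda>_. 0)"
  shows "\<exists>p1 b1 p2 b2. g (p2, b2) \<noteq> 0 \<and> f (p1, b1) \<noteq> 0 \<and> reach Q (pend Q p1) (pstart p2)"
proof -
  have "\<exists>qr. cup Q a b g f qr \<noteq> 0"
  proof (rule ccontr)
    assume "\<not> (\<exists>qr. cup Q a b g f qr \<noteq> 0)"
    then have "cup Q a b g f = (\<lambda>_. 0)" by (intro ext) blast
    then show False using ne by simp
  qed
  then obtain qr where qr: "cup Q a b g f qr \<noteq> 0" by blast
  obtain q r where qrd: "qr = (q, r)" by (cases qr)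
  have nz: "cup Q a b g f (q, r) \<noteq> 0" using qr qrd by simp
  have G: "q \<in> Gamma Q (a + b + 1) \<and> r \<in> basis Q \<and> parallel Q q r"
  proof (rule ccontr)
    assume nG: "\<not> (q \<in> Gamma Q (a + b + 1) \<and> r \<in> basis Q \<and> parallel Q q r)"
    have "cup Q a b g f (q, r) = 0" unfolding cup_def prod.case by (rule if_not_P[OF nG])
    then show False using nz by simp
  qed
  define A where "A = {(i1, i2, i3, i4). i1 \<le> i2 \<and> i2 \<le> i3 \<and> i3 \<le> i4 \<and> i4 \<le> plen q}"
  define h where "h = (\<lambda>(i1, i2, i3, i4).
          (\<Sum>b2\<in>basis Q. \<Sum>b1\<in>basis Q.
             (let a0 = subpath Q q 0 i1; p1 = subpath Q q i1 i2; c = subpath Q q i2 i3;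
                  p2 = subpath Q q i3 i4; e = subpath Q q i4 (plen q) in
              if p1 \<in> Gamma Q b \<and> p2 \<in> Gamma Q a \<and> parallel Q p1 b1 \<and> parallel Q p2 b2 \<and>
                 cat e (cat b2 (cat c (cat b1 a0))) = r
              then g (p2, b2) * f (p1, b1) else 0)))"
  have "cup Q a b g f (q, r) = sum h A" unfolding cup_def prod.case A_def h_def by (rule if_P[OF G])
  then have "sum h A \<noteq> 0" using nz by simp
  then obtain t where t: "t \<in> A" "h t \<noteq> 0" by (rule sum.not_neutral_contains_not_neutral)
  obtain i1 i2 i3 i4 where ti: "t = (i1, i2, i3, i4)" by (rule prod_cases4[of t])
  have ineq: "i1 \<le> i2" "i2 \<le> i3" "i3 \<le> i4" "i4 \<le> plen q" using t(1) unfolding ti A_def by simp_all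
  let ?T = "\<lambda>b2 b1. (if subpath Q q i1 i2 \<in> Gamma Q b \<and> subpath Q q i3 i4 \<in> Gamma Q a \<and>
                 parallel Q (subpath Q q i1 i2) b1 \<and> parallel Q (subpath Q q i3 i4) b2 \<and>
                 cat (subpath Q q i4 (plen q)) (cat b2 (cat (subpath Q q i2 i3) (cat b1 (subpath Q q 0 i1)))) = r
              then g (subpath Q q i3 i4, b2) * f (subpath Q q i1 i2, b1) else 0)"
  have e: "h t = (\<Sum>b2\<in>basis Q. \<Sum>b1\<in>basis Q. ?T b2 b1)" unfolding h_def ti by (simp only: prod.case Let_def)
  have "(\<Sum>b2\<in>basis Q. \<Sum>b1\<in>basis Q. ?T b2 b1) \<noteq> 0" using t(2) unfolding e .
  then obtain b2 where b2: "b2 \<in> basis Q" "(\<Sum>b1\<in>basis Q. ?T b2 b1) \<noteq> 0"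
    by (rule sum.not_neutral_contains_not_neutral)
  from b2(2) obtain b1 where b1: "b1 \<in> basis Q" "?T b2 b1 \<noteq> 0"
    by (rule sum.not_neutral_contains_not_neutral)
  from b1(2) have gf: "g (subpath Q q i3 i4, b2) * f (subpath Q q i1 i2, b1) \<noteq> 0"
    by (rule if_nz)
  have vq: "valid Q q" using Gamma_valid G by blast
  have "reach Q (vert_at Q q i2) (vert_at Q q i3)" using reach_subpath[OF mq vq ineq(2)] ineq by simp
  moreover have "pend Q (subpath Q q i1 i2) = vert_at Q q i2"
    by (rule pend_subpath) (use ineq in linarith)+
  moreover have "pstart (subpath Q q i3 i4) = vert_at Q q i3" by (rule pstart_subpath)
  moreover have "g (subpath Q q i3 i4, b2) \<noteq> 0" "f (subpath Q q i1 i2, b1) \<noteq> 0" using gf by auto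
  ultimately show ?thesis by metis
qed

theorem mainTheorem13:
  fixes Q :: "('v,'a) mquiver"
    and x y :: "('v,'a,'k::field) cochain"
    and m n :: nat
  assumes "monomial_quiver Q"
    and "fin_dim Q"
    and "triangular Q"
    and "m > 0" and "n > 0"
    and "irreducible_cocycle Q (m - 1) x"
    and "irreducible_cocycle Q (n - 1) y"
    and "cup Q (m - 1) (n - 1) x y \<noteq> (\<lambda>_. 0)"
  shows "cup Q (n - 1) (m - 1) y x = (\<lambda>_. 0)"
proof (rule ccontr)
  assume ne2: "cup Q (n - 1) (m - 1) y x \<noteq> (\<lambda>_. 0)"
  note mq = assms(1) and tr = assms(3)
  obtain p1 b1 p2 b2 where A: "x (p2, b2) \<noteq> 0" "y (p1, b1) \<noteq> 0" "reach Q (pend Q p1) (pstart p2)"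
    using cup_extract[OF mq assms(8)] by blast
  obtain p1' b1' p2' b2' where B: "y (p2', b2') \<noteq> 0" "x (p1', b1') \<noteq> 0" "reach Q (pend Q p1') (pstart p2')"
    using cup_extract[OF mq ne2] by blast
  have g1: "reachp Q (pstart p2) (pend Q p1')"
    using irr_good[OF mq tr assms(6), of "(p2, b2)" "(p1', b1')"] A(1) B(2) by simp
  have g2: "reachp Q (pstart p2') (pend Q p1)"
    using irr_good[OF mq tr assms(7), of "(p2', b2')" "(p1, b1)"] A(2) B(1) by simp
  have c1: "reachp Q (pend Q p1) (pend Q p1')" by (rule reach_reachp[OF A(3) g1])
  have c2: "reachp Q (pend Q p1) (pstart p2')" by (rule reachp_reach[OF c1 B(3)])
  have c3: "reachp Q (pend Q p1) (pend Q p1)" by (rule reachp_reach[OF c2 reachp_imp_reach[OF g2]])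
  then show False using reachp_irrefl[OF tr] by blast
qed


end
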